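(* Let $1\le n<L$ and suppose $p_k,q_k>0$ for all $k$. Let $\pi$ be the stationary distribution of the ASEP on $\Psi_{L,n}$ and $\hat\pi$ the (unique) stationary distribution of the chain on $\Omega_{L,n}$. Then for every $\psi\in\Psi_{L,n}$, $$\pi(\psi)=\sum_{\omega\in\Pi^{-1}(\psi)}\hat\pi(\omega).$$
   Context: Particle labels $k$ are taken modulo $n$, positions modulo $L$. $\Omega_{L,n}$ is the set of words $w_1\cdots w_L$ on the ring $\mathbb{Z}/L\mathbb{Z}$ over the alphabet $\{\bullet_1,\dots,\bullet_n,\Box_1,\dots,\Box_n\}$ in which each $\bullet_k$ occurs exactly once, the letters $\bullet_1,\dots,\bullet_n$ appear in this cyclic order, and the remaining $L-n$ letters are arbitrary $\Box_i$'s. The chain on $\Omega_{L,n}$ has transitions (displayed segments are consecutive positions, rest unchanged, $C$ a possibly empty word in the $\Box$-letters): (T1) $\bullet_k\Box_i \to \Box_i\bullet_k$ at rate $p_k$, if $i\neq k$; (T2) $\bullet_{k-1}\,C\,\bullet_k\Box_k \to \bullet_{k-1}\Box_{k-1}\,C\,\bullet_k$ at rate $p_k$; (T3) $\Box_i\bullet_k \to \bullet_k\Box_i$ at rate $q_k$, if $i\neq k$; (T4) $\Box_k\bullet_k\,C\,\bullet_{k+1} \to \bullet_k\,C\,\Box_{k+1}\bullet_{k+1}$ at rate $q_k$. $\Psi_{L,n}$ is the set of words on the ring $\mathbb{Z}/L\mathbb{Z}$ containing each of $\bullet_1,\dots,\bullet_n$ exactly once in this cyclic order and $L-n$ vacancies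 $\Box$; the ASEP on $\Psi_{L,n}$ has only the transitions $\bullet_k\Box\to\Box\bullet_k$ at rate $p_k$ and $\Box\bullet_k\to\bullet_k\Box$ at rate $q_k$. The map $\Pi:\Omega_{L,n}\to\Psi_{L,n}$ replaces every $\Box_i$ by $\Box$. *)

theory Defs
  imports Complex_Main
begin

text \<open>Words on the ring Z/LZ are lists of length L; position i < L, indices mod L.
  Particle labels are 0..n-1 (paper: 1..n), taken mod n.\<close>

datatype oletter = Pt nat | Bx nat
datatype pletter = PPt nat | Vac

definition nxt :: "nat \<Rightarrow> nat \<Rightarrow> nat" where "nxt L x = Suc x mod L"
definition prv :: "nat \<Rightarrow> nat \<Rightarrow> nat" where "prv L x = (x + L - 1) mod L"

fun olab :: "oletter \<Rightarrow> nat option" where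
  "olab (Pt k) = Some k" | "olab (Bx m) = None"
fun plab :: "pletter \<Rightarrow> nat option" where
  "plab (PPt k) = Some k" | "plab Vac = None"

definition next_dist :: "nat \<Rightarrow> nat option list \<Rightarrow> nat \<Rightarrow> nat" where
  "next_dist L u i = (LEAST d. 0 < d \<and> u ! ((i + d) mod L) \<noteq> None)"
definition prev_dist :: "nat \<Rightarrow> nat option list \<Rightarrow> nat \<Rightarrow> nat" where
  "prev_dist L u i = (LEAST d. 0 < d \<and> u ! ((i + L - d) mod L) \<noteq> None)"

definition wf_lab :: "nat \<Rightarrow> nat \<Rightarrow> nat option list \<Rightarrow> bool" where
  "wf_lab L n u \<longleftrightarrow> length u = L
     \<and> (\<forall>i<L. \<forall>k. u ! i = Some k \<longrightarrow> k < n)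
     \<and> (\<forall>k<n. \<exists>!i. i < L \<and> u ! i = Some k)
     \<and> (\<forall>i<L. \<forall>k. u ! i = Some k \<longrightarrow>
          u ! ((i + next_dist L u i) mod L) = Some (Suc k mod n))"

definition Omega :: "nat \<Rightarrow> nat \<Rightarrow> oletter list set" where
  "Omega L n = {w. wf_lab L n (map olab w) \<and> (\<forall>i<length w. \<forall>m. w ! i = Bx m \<longrightarrow> m < n)}"

definition Psi :: "nat \<Rightarrow> nat \<Rightarrow> pletter list set" where
  "Psi L n = {w. wf_lab L n (map plab w)}"

fun proj_letter :: "oletter \<Rightarrow> pletter" where
  "proj_letter (Pt k) = PPt k" | "proj_letter (Bx m) = Vac"

definition Proj :: "oletter list \<Rightarrow> pletter list" where
  "Proj w = map proj_letter w"

definition T1 :: "nat \<Rightarrow> (nat \<Rightarrow> real) \<Rightarrow> oletter list \<Rightarrow> nat \<Rightarrow> (oletter list \<times> real) option" where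
  "T1 L p w i = (case (w ! i, w ! nxt L i) of
      (Pt k, Bx m) \<Rightarrow> if m \<noteq> k then Some (w[i := Bx m, nxt L i := Pt k], p k) else None
    | _ \<Rightarrow> None)"

definition T3 :: "nat \<Rightarrow> (nat \<Rightarrow> real) \<Rightarrow> oletter list \<Rightarrow> nat \<Rightarrow> (oletter list \<times> real) option" where
  "T3 L q w i = (case (w ! prv L i, w ! i) of
      (Bx m, Pt k) \<Rightarrow> if m \<noteq> k then Some (w[prv L i := Pt k, i := Bx m], q k) else None
    | _ \<Rightarrow> None)"

text \<open>T2: bullet_(k-1) C bullet_k Box_k -> bullet_(k-1) Box_(k-1) C bullet_k, where a is the
  position of bullet_(k-1) (d steps behind bullet_k at j); t is the offset of x after a, in 1..L.\<close>
definition T2 :: "nat \<Rightarrow> nat \<Rightarrow> (nat \<Rightarrow> real) \<Rightarrow> oletter list \<Rightarrow> nat \<Rightarrow> (oletter list \<times> real) option" where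
  "T2 L n p w j = (case (w ! j, w ! nxt L j) of
      (Pt k, Bx m) \<Rightarrow> if m = k then
         (let d = prev_dist L (map olab w) j; a = (j + L - d) mod L in
          Some (map (\<lambda>x. if x = nxt L j then Pt k
                         else let t = (x + L - Suc a) mod L + 1 in
                           if t = 1 then Bx ((k + n - 1) mod n)
                           else if 2 \<le> t \<and> t \<le> d then w ! prv L x
                           else w ! x) [0..<L], p k))
       else None
    | _ \<Rightarrow> None)"

text \<open>T4: Box_k bullet_k C bullet_(k+1) -> bullet_k C Box_(k+1) bullet_(k+1), where b is the
  position of bullet_(k+1) (e steps after bullet_k at j); s is the distance from x to b, in 1..L.\<close>
definition T4 :: "nat \<Rightarrow> nat \<Rightarrow> (nat \<Rightarrow> real) \<Rightarrow> oletter list \<Rightarrow> nat \<Rightarrow> (oletter list \<times> real) option" where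
  "T4 L n q w j = (case (w ! prv L j, w ! j) of
      (Bx m, Pt k) \<Rightarrow> if m = k then
         (let e = next_dist L (map olab w) j; b = (j + e) mod L in
          Some (map (\<lambda>x. if x = prv L j then Pt k
                         else let s = (b + L - Suc x) mod L + 1 in
                           if s = 1 then Bx (Suc k mod n)
                           else if 2 \<le> s \<and> s \<le> e then w ! nxt L x
                           else w ! x) [0..<L], q k))
       else None
    | _ \<Rightarrow> None)"

definition omove :: "nat \<Rightarrow> nat \<Rightarrow> (nat \<Rightarrow> real) \<Rightarrow> (nat \<Rightarrow> real) \<Rightarrow> oletter list \<Rightarrow> nat
    \<Rightarrow> (oletter list \<times> real) option" where
  "omove L n p q w i = (let ty = i div L; pos = i mod L in
     if ty = 0 then T1 L p w pos else if ty = 1 then T2 L n p w pos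
     else if ty = 2 then T3 L q w pos else T4 L n q w pos)"

definition pmove :: "nat \<Rightarrow> (nat \<Rightarrow> real) \<Rightarrow> (nat \<Rightarrow> real) \<Rightarrow> pletter list \<Rightarrow> nat
    \<Rightarrow> (pletter list \<times> real) option" where
  "pmove L p q w i = (let pos = i mod L in
     if i div L = 0 then
       (case (w ! pos, w ! nxt L pos) of
          (PPt k, Vac) \<Rightarrow> Some (w[pos := Vac, nxt L pos := PPt k], p k) | _ \<Rightarrow> None)
     else
       (case (w ! prv L pos, w ! pos) of
          (Vac, PPt k) \<Rightarrow> Some (w[prv L pos := PPt k, pos := Vac], q k) | _ \<Rightarrow> None))"

definition trate :: "('s \<Rightarrow> nat \<Rightarrow> ('s \<times> real) option) \<Rightarrow> nat \<Rightarrow> 's \<Rightarrow> 's \<Rightarrow> real" where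
  "trate mv N s s' = (\<Sum>i<N. case mv s i of None \<Rightarrow> 0 | Some (t, r) \<Rightarrow> if t = s' then r else 0)"

definition stationary :: "'s set \<Rightarrow> ('s \<Rightarrow> 's \<Rightarrow> real) \<Rightarrow> ('s \<Rightarrow> real) \<Rightarrow> bool" where
  "stationary S Q \<pi> \<longleftrightarrow> (\<forall>s\<in>S. 0 \<le> \<pi> s) \<and> (\<Sum>s\<in>S. \<pi> s) = 1
     \<and> (\<forall>s\<in>S. (\<Sum>s'\<in>S - {s}. \<pi> s * Q s s') = (\<Sum>s'\<in>S - {s}. \<pi> s' * Q s' s))"

definition QOmega :: "nat \<Rightarrow> nat \<Rightarrow> (nat \<Rightarrow> real) \<Rightarrow> (nat \<Rightarrow> real) \<Rightarrow> oletter list \<Rightarrow> oletter list \<Rightarrow> real" where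
  "QOmega L n p q = trate (omove L n p q) (4 * L)"

definition QPsi :: "nat \<Rightarrow> (nat \<Rightarrow> real) \<Rightarrow> (nat \<Rightarrow> real) \<Rightarrow> pletter list \<Rightarrow> pletter list \<Rightarrow> real" where
  "QPsi L p q = trate (pmove L p q) (2 * L)"

end

theory Submission
  imports Defs
begin


lemma mod_lt2: "y < 2*L \<Longrightarrow> y mod (L::nat) = (if y < L then y else y - L)"
  by (metis le_mod_geq less_diff_conv2 mod_less mult_2 not_less)

definition labs :: "nat option list \<Rightarrow> nat list" where
  "labs u = map the (filter (\<lambda>x. x \<noteq> None) u)"

definition ps :: "nat option list \<Rightarrow> nat list" where
  "ps u = filter (\<lambda>i. u!i \<noteq> None) [0..<length u]"

lemma labs_eq: "labs u = map (\<lambda>i. the (u!i)) (ps u)"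
proof -
  have "u = map (nth u) [0..<length u]" by (simp add: map_nth)
  then have "filter (\<lambda>x. x \<noteq> None) u = map (nth u) (ps u)"
    unfolding ps_def by (metis (no_types, lifting) filter_cong filter_map o_apply)
  then show ?thesis unfolding labs_def by simp
qed

lemma ps_sorted: "sorted_wrt (<) (ps u)"
  unfolding ps_def by (simp add: sorted_wrt_filter)

lemma ps_set: "set (ps u) = {i. i < length u \<and> u!i \<noteq> None}"
  unfolding ps_def by auto

lemma ps_distinct: "distinct (ps u)"
  unfolding ps_def by simp

lemma length_labs: "length (labs u) = length (ps u)"
  by (simp add: labs_eq)

lemma ps_nth_lt: "j < length (ps u) \<Longrightarrow> ps u ! j < length u"
  using ps_set nth_mem by blast

lemma ps_nth_some: "j < length (ps u) \<Longrightarrow> u ! (ps u ! j) = Some (labs u ! j)"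
proof -
  assume j: "j < length (ps u)"
  then have "ps u ! j \<in> set (ps u)" by simp
  then have "u ! (ps u ! j) \<noteq> None" using ps_set by blast
  then show ?thesis using j by (auto simp: labs_eq)
qed

lemma ps_mono: "a < length (ps u) \<Longrightarrow> b < length (ps u) \<Longrightarrow> a < b \<Longrightarrow> ps u ! a < ps u ! b"
  using ps_sorted sorted_wrt_nth_less by blast

lemma ps_mono_rev: "a < length (ps u) \<Longrightarrow> b < length (ps u) \<Longrightarrow> ps u ! a < ps u ! b \<Longrightarrow> a < b"
  by (metis ps_mono linorder_neq_iff order_less_asym)

lemma ps_index: "i < length u \<Longrightarrow> u!i \<noteq> None \<Longrightarrow> \<exists>j<length (ps u). ps u ! j = i"
proof -
  assume "i < length u" "u!i \<noteq> None"
  then have "i \<in> set (ps u)" using ps_set by blast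
  then show ?thesis by (metis in_set_conv_nth)
qed

lemma ps_between: "Suc j < length (ps u) \<Longrightarrow> ps u ! j < x \<Longrightarrow> x < ps u ! Suc j \<Longrightarrow> u!x = None"
proof (rule ccontr)
  assume a: "Suc j < length (ps u)" "ps u ! j < x" "x < ps u ! Suc j" "u!x \<noteq> None"
  have "x < length u" using a ps_nth_lt[of "Suc j" u] by simp
  then obtain l where l: "l < length (ps u)" "ps u ! l = x" using ps_index a by blast
  have "j < l" using ps_mono_rev[of j u l] a l by simp
  moreover have "l < Suc j" using ps_mono_rev[of l u "Suc j"] a l by simp
  ultimately show False by simp
qed

lemma ps_after: "length (ps u) > 0 \<Longrightarrow> ps u ! (length (ps u) - 1) < x \<Longrightarrow> x < length u \<Longrightarrow> u!x = None"
proof (rule ccontr)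
  assume a: "length (ps u) > 0" "ps u ! (length (ps u) - 1) < x" "x < length u" "u!x \<noteq> None"
  then obtain l where l: "l < length (ps u)" "ps u ! l = x" using ps_index by blast
  have "length (ps u) - 1 < l" using ps_mono_rev[of "length (ps u) - 1" u l] a l by simp
  then show False using l by simp
qed

lemma ps_before: "length (ps u) > 0 \<Longrightarrow> x < ps u ! 0 \<Longrightarrow> u!x = None"
proof (rule ccontr)
  assume a: "length (ps u) > 0" "x < ps u ! 0" "u!x \<noteq> None"
  have "x < length u" using a ps_nth_lt[of 0 u] by simp
  then obtain l where l: "l < length (ps u)" "ps u ! l = x" using ps_index a by blast
  have "l < 0" using ps_mono_rev[of l u 0] a l by simp
  then show False by simp
qed

lemma ND1:
  assumes "length u = L" "i < j" "j < L" "u!j \<noteq> None" "\<forall>x. i < x \<and> x < j \<longrightarrow> u!x = None"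
  shows "next_dist L u i = j - i"
  unfolding next_dist_def
proof (rule Least_equality)
  show "0 < j - i \<and> u ! ((i + (j - i)) mod L) \<noteq> None" using assms by simp
next
  fix d assume d: "0 < d \<and> u ! ((i + d) mod L) \<noteq> None"
  show "j - i \<le> d"
  proof (rule ccontr)
    assume "\<not> j - i \<le> d"
    then have "i + d < j" by simp
    then have "(i + d) mod L = i + d" using assms by simp
    then show False using d assms \<open>i + d < j\<close> by auto
  qed
qed

lemma ND2:
  assumes "length u = L" "i < L" "\<forall>x. i < x \<and> x < L \<longrightarrow> u!x = None"
    "f \<le> i" "u!f \<noteq> None" "\<forall>x. x < f \<longrightarrow> u!x = None"
  shows "next_dist L u i = L - i + f" "(i + next_dist L u i) mod L = f"
proof -
  show nd: "next_dist L u i = L - i + f"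
  unfolding next_dist_def
  proof (rule Least_equality)
    have "(i + (L - i + f)) mod L = f" using assms mod_lt2[of "i + (L - i + f)" L] by auto
    then show "0 < L - i + f \<and> u ! ((i + (L - i + f)) mod L) \<noteq> None" using assms by simp
  next
    fix d assume d: "0 < d \<and> u ! ((i + d) mod L) \<noteq> None"
    show "L - i + f \<le> d"
    proof (rule ccontr)
      assume "\<not> L - i + f \<le> d"
      then have "i + d < 2 * L" using assms by simp
      then have m: "(i + d) mod L = (if i + d < L then i + d else i + d - L)" by (rule mod_lt2)
      show False
      proof (cases "i + d < L")
        case True then show ?thesis using d m assms by auto
      next
        case False
        then have "i + d - L < f" using \<open>\<not> L - i + f \<le> d\<close> assms by simp
        then show ?thesis using d m assms False by auto
      qed
    qed
  qed
  show "(i + next_dist L u i) mod L = f" using nd assms mod_lt2[of "i + (L - i + f)" L] by auto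
qed




definition good :: "nat \<Rightarrow> nat list \<Rightarrow> bool" where
  "good n ls \<longleftrightarrow> (\<exists>r<n. ls = map (\<lambda>j. (j + r) mod n) [0..<n])"

lemma CH1:
  assumes n: "1 \<le> n" and len: "length u = L" and g: "good n (labs u)"
  shows "wf_lab L n u"
proof -
  obtain r where r: "r < n" "labs u = map (\<lambda>j. (j + r) mod n) [0..<n]" using g good_def by auto
  have lp: "length (ps u) = n" using r length_labs by (metis length_map length_upt minus_nat.diff_0)
  have lab: "\<And>j. j < n \<Longrightarrow> u ! (ps u ! j) = Some ((j + r) mod n)"
    using ps_nth_some lp r by simp
  have A: "\<forall>i<L. \<forall>k. u ! i = Some k \<longrightarrow> k < n"
  proof (intro allI impI)
    fix i k assume "i < L" "u ! i = Some k"
    then obtain j where "j < n" "ps u ! j = i" using ps_index len lp by (metis option.distinct(1))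
    then show "k < n" using lab \<open>u!i = Some k\<close> n by auto
  qed
  have B: "\<forall>k<n. \<exists>!i. i < L \<and> u ! i = Some k"
  proof (intro allI impI)
    fix k assume k: "k < n"
    define j where "j = (if r \<le> k then k - r else k + n - r)"
    have j: "j < n" "(j + r) mod n = k" using k r unfolding j_def by auto
    show "\<exists>!i. i < L \<and> u ! i = Some k"
    proof (rule ex1I[of _ "ps u ! j"])
      show "ps u ! j < L \<and> u ! (ps u ! j) = Some k" using j lab ps_nth_lt lp len by auto
    next
      fix i assume i: "i < L \<and> u ! i = Some k"
      then obtain j' where j': "j' < n" "ps u ! j' = i" using ps_index len lp by (metis option.distinct(1))
      have "(j' + r) mod n = k" using lab j' i by auto
      moreover have "(j' + r) mod n = (if j' + r < n then j' + r else j' + r - n)"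
        using j' r by (intro mod_lt2) simp
      moreover have "(j + r) mod n = (if j + r < n then j + r else j + r - n)"
        using j r by (intro mod_lt2) simp
      ultimately have "j' = j" using j j' r by (auto split: if_splits)
      then show "i = ps u ! j" using j' by simp
    qed
  qed
  have C: "\<forall>i<L. \<forall>k. u ! i = Some k \<longrightarrow> u ! ((i + next_dist L u i) mod L) = Some (Suc k mod n)"
  proof (intro allI impI)
    fix i k assume i: "i < L" "u ! i = Some k"
    then obtain j where j: "j < n" "ps u ! j = i" using ps_index len lp by (metis option.distinct(1))
    have k: "k = (j + r) mod n" using lab j i by auto
    show "u ! ((i + next_dist L u i) mod L) = Some (Suc k mod n)"
    proof (cases "Suc j < n")
      case True
      have lt: "i < ps u ! Suc j" using ps_mono[of j u "Suc j"] True lp j by simp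
      have "next_dist L u i = ps u ! Suc j - i"
        apply (rule ND1[OF len lt])
        using ps_nth_lt[of "Suc j" u] True lp len lab apply simp
        using lab True apply simp
        using ps_between[of j u] True lp j by simp
      moreover have "ps u ! Suc j < L" using ps_nth_lt[of "Suc j" u] True lp len by simp
      ultimately have "(i + next_dist L u i) mod L = ps u ! Suc j" using lt by simp
      then show ?thesis using lab True k by (simp add: mod_Suc_eq)
    next
      case False
      then have jn: "j = n - 1" using j by simp
      have pos: "length (ps u) > 0" using lp n by simp
      have "(i + next_dist L u i) mod L = ps u ! 0"
        apply (rule ND2(2)[OF len i(1)])
        using ps_after[OF pos] jn j lp len apply simp
        using j ps_mono[of 0 u j] lp apply (cases j) apply simp apply simp
        using lab n apply simp
        using ps_before[OF pos] by simp
      moreover have "Suc k mod n = r mod n"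
      proof -
        have "Suc k mod n = Suc (j + r) mod n" using k by (simp add: mod_Suc_eq)
        also have "Suc (j + r) = r + n" using jn n by simp
        finally show ?thesis by simp
      qed
      ultimately show ?thesis using lab n by simp
    qed
  qed
  show ?thesis unfolding wf_lab_def using len A B C by blast
qed




lemma CH2:
  assumes n: "1 \<le> n" and len: "length u = L" and w: "wf_lab L n u"
  shows "good n (labs u)"
proof -
  have A: "\<forall>i<L. \<forall>k. u ! i = Some k \<longrightarrow> k < n"
   and B: "\<forall>k<n. \<exists>!i. i < L \<and> u ! i = Some k"
   and C: "\<forall>i<L. \<forall>k. u ! i = Some k \<longrightarrow> u ! ((i + next_dist L u i) mod L) = Some (Suc k mod n)"
    using w unfolding wf_lab_def by auto
  have Bu: "\<And>k i i'. k < n \<Longrightarrow> i < L \<Longrightarrow> u ! i = Some k \<Longrightarrow> i' < L \<Longrightarrow> u ! i' = Some k \<Longrightarrow> i = i'"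
  proof -
    fix k i i' assume h: "k < n" "i < L" "u ! i = Some k" "i' < L" "u ! i' = Some k"
    from B h(1) have "\<exists>!i. i < L \<and> u ! i = Some k" by blast
    then show "i = i'" using h by blast
  qed
  define ls where "ls = labs u"
  define m where "m = length (ps u)"
  have lm: "length ls = m" unfolding ls_def m_def by (simp add: length_labs)
  have consec: "ls ! Suc j = Suc (ls ! j) mod n" if j: "Suc j < m" for j
  proof -
    have sj: "u ! (ps u ! j) = Some (ls ! j)" using ps_nth_some j m_def ls_def by simp
    have lt: "ps u ! j < ps u ! Suc j" using ps_mono[of j u "Suc j"] j m_def by simp
    have "next_dist L u (ps u ! j) = ps u ! Suc j - ps u ! j"
      apply (rule ND1[OF len lt])
      using ps_nth_lt[of "Suc j" u] j m_def len apply simp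
      using ps_nth_some[of "Suc j" u] j m_def apply simp
      using ps_between[of j u] j m_def by simp
    moreover have "ps u ! Suc j < L" using ps_nth_lt[of "Suc j" u] j m_def len by simp
    ultimately have "(ps u ! j + next_dist L u (ps u ! j)) mod L = ps u ! Suc j" using lt by simp
    moreover have "ps u ! j < L" using ps_nth_lt[of j u] j m_def len by simp
    ultimately have "u ! (ps u ! Suc j) = Some (Suc (ls ! j) mod n)" using C[rule_format, OF _ sj] by simp
    then show ?thesis using ps_nth_some[of "Suc j" u] j m_def ls_def by simp
  qed
  have form: "ls ! j = (ls ! 0 + j) mod n" if "j < m" for j
    using that
  proof (induction j)
    case 0
    have "ps u ! 0 < L" using ps_nth_lt[of 0 u] 0 m_def len by simp
    then have "ls ! 0 < n" using A ps_nth_some[of 0 u] 0 m_def ls_def by blast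
    then show ?case by simp
  next
    case (Suc j)
    then have "ls ! Suc j = Suc (ls ! j) mod n" using consec by simp
    also have "\<dots> = Suc ((ls ! 0 + j) mod n) mod n" using Suc by simp
    also have "\<dots> = (ls ! 0 + Suc j) mod n" by (simp add: mod_Suc_eq)
    finally show ?case .
  qed
  have dist: "distinct ls"
  proof (rule distinct_conv_nth[THEN iffD2], intro allI impI)
    fix a b assume ab: "a < length ls" "b < length ls" "a \<noteq> b"
    show "ls ! a \<noteq> ls ! b"
    proof
      assume eq: "ls ! a = ls ! b"
      have ua: "u ! (ps u ! a) = Some (ls ! a)" using ps_nth_some ab lm m_def ls_def by simp
      have ub: "u ! (ps u ! b) = Some (ls ! a)" using ps_nth_some ab lm m_def ls_def eq by simp
      have la: "ps u ! a < L" "ps u ! b < L" using ps_nth_lt ab lm m_def len by auto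
      have "ls ! a < n" using A ua la by blast
      then have "ps u ! a = ps u ! b" using Bu[OF _ la(1) ua la(2) ub] by blast
      then show False using ps_distinct ab lm m_def by (simp add: nth_eq_iff_index_eq)
    qed
  qed
  have st: "set ls = {0..<n}"
  proof
    show "set ls \<subseteq> {0..<n}"
    proof
      fix k assume "k \<in> set ls"
      then obtain j where j: "j < m" "ls ! j = k" using lm by (metis in_set_conv_nth)
      then show "k \<in> {0..<n}" using A ps_nth_some[of j u] ps_nth_lt[of j u] m_def ls_def len by auto
    qed
  next
    show "{0..<n} \<subseteq> set ls"
    proof
      fix k assume "k \<in> {0..<n}"
      then obtain i where i: "i < L" "u ! i = Some k" using B by auto
      then obtain j where j: "j < m" "ps u ! j = i" using ps_index len m_def by (metis option.distinct(1))
      then have "ls ! j = k" using ps_nth_some[of j u] i m_def ls_def by simp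
      then show "k \<in> set ls" using j lm by (metis nth_mem)
    qed
  qed
  have "m = n" using distinct_card[OF dist] st lm by simp
  have "ls = map (\<lambda>j. (j + ls ! 0) mod n) [0..<n]"
  proof (rule nth_equalityI)
    show "length ls = length (map (\<lambda>j. (j + ls ! 0) mod n) [0..<n])" using lm \<open>m = n\<close> by simp
  next
    fix j assume "j < length ls"
    then have "j < m" using lm by simp
    then show "ls ! j = map (\<lambda>j. (j + ls ! 0) mod n) [0..<n] ! j"
      using form[of j] \<open>m = n\<close> by (simp add: add.commute)
  qed
  moreover have "ls ! 0 < n"
  proof -
    have "0 < length ls" using lm \<open>m = n\<close> n by simp
    then have "ls ! 0 \<in> set ls" by simp
    then show ?thesis using st by simp
  qed
  ultimately show ?thesis unfolding good_def ls_def by blast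
qed

lemma CH: "1 \<le> n \<Longrightarrow> length u = L \<Longrightarrow> wf_lab L n u \<longleftrightarrow> good n (labs u)"
  using CH1 CH2 by blast




lemma labs_simps[simp]: "labs [] = []" "labs (None # u) = labs u" "labs (Some k # u) = k # labs u"
  "labs (a @ b) = labs a @ labs b"
  by (auto simp: labs_def)

lemma nxt_eq: "i < L \<Longrightarrow> nxt L i = (if Suc i = L then 0 else Suc i)"
  by (simp add: nxt_def)

lemma prv_eq: "i < L \<Longrightarrow> prv L i = (if i = 0 then L - 1 else i - 1)"
  unfolding prv_def using mod_lt2[of "i + L - 1" L] by auto

lemma nxt_lt: "0 < L \<Longrightarrow> nxt L i < L" by (simp add: nxt_def)
lemma prv_lt: "0 < L \<Longrightarrow> prv L i < L" by (simp add: prv_def)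

lemma split2: "Suc i < length u \<Longrightarrow> u = take i u @ u!i # u!(Suc i) # drop (Suc (Suc i)) u"
  by (simp add: Cons_nth_drop_Suc)

lemma split_ends: "2 \<le> length u \<Longrightarrow> \<exists>M. u = u!0 # M @ [u!(length u - 1)]"
proof -
  assume l: "2 \<le> length u"
  obtain a M' where u: "u = a # M'" using l by (cases u) auto
  obtain M b where M': "M' = M @ [b]" using l u by (cases M' rule: rev_cases) auto
  show ?thesis using u M' by (intro exI[of _ M]) (simp add: nth_append)
qed

lemma good_snoc: "1 \<le> n \<Longrightarrow> good n (xs @ [k]) \<Longrightarrow> good n (k # xs)"
proof -
  assume n: "1 \<le> n" and g: "good n (xs @ [k])"
  obtain r where r: "r < n" "xs @ [k] = map (\<lambda>j. (j + r) mod n) [0..<n]" using g good_def by auto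
  have "length (xs @ [k]) = n" using r(2) by simp
  then have lx: "length xs = n - 1" by simp
  have xs: "\<And>j. j < n - 1 \<Longrightarrow> xs ! j = (j + r) mod n"
  proof -
    fix j assume "j < n - 1"
    then have "(xs @ [k]) ! j = xs ! j" using lx by (simp add: nth_append)
    moreover have "j < n" using \<open>j < n - 1\<close> by simp
    then have "(xs @ [k]) ! j = (j + r) mod n" unfolding r(2) by simp
    ultimately show "xs ! j = (j + r) mod n" by simp
  qed
  have k: "k = (n - 1 + r) mod n"
  proof -
    have "(xs @ [k]) ! (n - 1) = k" using lx by (simp add: nth_append)
    moreover have "(xs @ [k]) ! (n - 1) = (n - 1 + r) mod n" using r(2) n by simp
    ultimately show ?thesis by simp
  qed
  define r' where "r' = (n - 1 + r) mod n"
  have eq: "k # xs = map (\<lambda>j. (j + r') mod n) [0..<n]"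
  proof (rule nth_equalityI)
    show "length (k # xs) = length (map (\<lambda>j. (j + r') mod n) [0..<n])" using lx n by simp
  next
    fix j assume j: "j < length (k # xs)"
    show "(k # xs) ! j = map (\<lambda>j. (j + r') mod n) [0..<n] ! j"
    proof (cases j)
      case 0 then show ?thesis using k r'_def n by simp
    next
      case (Suc j')
      then have "j' < n - 1" using j lx by simp
      then have "(k # xs) ! j = (j' + r) mod n" using xs Suc by simp
      also have "\<dots> = (j + r') mod n"
      proof -
        have "(j + r') mod n = (j + (n - 1 + r)) mod n" unfolding r'_def by (simp add: mod_add_right_eq)
        also have "j + (n - 1 + r) = (j' + r) + n" using Suc n by simp
        finally show ?thesis by simp
      qed
      moreover have "j < n" using j lx n by simp
      ultimately show ?thesis by simp
    qed
  qed
  have "r' < n" using n r'_def by simp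
  then show ?thesis unfolding good_def apply (intro exI[of _ r'] conjI) using eq by simp_all
qed

lemma good_cons: "1 \<le> n \<Longrightarrow> good n (k # xs) \<Longrightarrow> good n (xs @ [k])"
proof -
  assume n: "1 \<le> n" and g: "good n (k # xs)"
  obtain r where r: "r < n" "k # xs = map (\<lambda>j. (j + r) mod n) [0..<n]" using g good_def by auto
  have "length (k # xs) = n" using r(2) by simp
  then have lx: "length xs = n - 1" by simp
  have xs: "\<And>j. j < n - 1 \<Longrightarrow> xs ! j = (Suc j + r) mod n"
  proof -
    fix j assume "j < n - 1"
    then have "(k # xs) ! Suc j = xs ! j" by simp
    moreover have "Suc j < n" using \<open>j < n - 1\<close> by simp
    moreover have "(k # xs) ! Suc j = (Suc j + r) mod n" using r(2) \<open>Suc j < n\<close> by simp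
    ultimately show "xs ! j = (Suc j + r) mod n" by simp
  qed
  have k: "k = r mod n"
  proof -
    have "(k # xs) ! 0 = (0 + r) mod n" using r(2) n by simp
    then show ?thesis by simp
  qed
  define r' where "r' = Suc r mod n"
  have eq: "xs @ [k] = map (\<lambda>j. (j + r') mod n) [0..<n]"
  proof (rule nth_equalityI)
    show "length (xs @ [k]) = length (map (\<lambda>j. (j + r') mod n) [0..<n])" using lx n by simp
  next
    fix j assume j: "j < length (xs @ [k])"
    show "(xs @ [k]) ! j = map (\<lambda>j. (j + r') mod n) [0..<n] ! j"
    proof (cases "j < n - 1")
      case True
      then have "(xs @ [k]) ! j = (Suc j + r) mod n" using xs lx by (simp add: nth_append)
      also have "\<dots> = (j + r') mod n" unfolding r'_def by (simp add: mod_add_right_eq)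
      moreover have "j < n" using j lx n by simp
      ultimately show ?thesis by simp
    next
      case False
      then have jj: "j = n - 1" using j lx by simp
      then have "(xs @ [k]) ! j = r mod n" using k lx by (simp add: nth_append)
      also have "\<dots> = (j + r') mod n"
      proof -
        have "(j + r') mod n = (j + Suc r) mod n" unfolding r'_def by (simp add: mod_add_right_eq)
        also have "j + Suc r = r + n" using jj n by simp
        finally show ?thesis by simp
      qed
      finally show ?thesis using j lx jj n by simp
    qed
  qed
  have "r' < n" using n r'_def by simp
  then show ?thesis unfolding good_def apply (intro exI[of _ r'] conjI) using eq by simp_all
qed

lemma HR:
  assumes n: "1 \<le> n" and L: "2 \<le> L" and len: "length u = L" and w: "wf_lab L n u"
    and i: "i < L" and ui: "u!i = Some k" and un: "u!(nxt L i) = None"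
  shows "wf_lab L n (u[i := None, nxt L i := Some k])"
proof -
  have g: "good n (labs u)" using CH[OF n len] w by simp
  have "good n (labs (u[i := None, nxt L i := Some k]))"
  proof (cases "Suc i = L")
    case False
    then have nx: "nxt L i = Suc i" using nxt_eq i by simp
    have si: "Suc i < length u" using False i len by simp
    define A where "A = take i u"
    define C where "C = drop (Suc (Suc i)) u"
    have u: "u = A @ Some k # None # C" using split2[OF si] ui un nx A_def C_def by simp
    have la: "length A = i" using A_def i len by simp
    have "u[i := None, nxt L i := Some k] = A @ None # Some k # C"
      using u la nx by (simp add: list_update_append)
    then show ?thesis using g u by simp
  next
    case True
    then have nx: "nxt L i = 0" using nxt_eq i by simp
    obtain M where u: "u = u!0 # M @ [u!(length u - 1)]" using split_ends len L by blast
    have e1: "u ! 0 = None" using un nx by simp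
    have "length u - 1 = i" using True len by simp
    then have e2: "u ! (length u - 1) = Some k" using ui by simp
    have u2: "u = None # M @ [Some k]" using u unfolding e1 e2 .
    have lM: "length M = L - 2"
    proof -
      have "length u = length M + 2" by (subst u2) simp
      then show ?thesis using len by simp
    qed
    have "(None # M @ [Some k])[Suc (length M) := None, 0 := Some k] = Some k # M @ [None]"
      by (simp add: list_update_append)
    moreover have "i = Suc (length M)" using lM L True by simp
    ultimately have "u[i := None, nxt L i := Some k] = Some k # M @ [None]"
      using u2 nx by simp
    then show ?thesis using g u2 good_snoc[OF n] by simp
  qed
  moreover have "length (u[i := None, nxt L i := Some k]) = L" using len by simp
  ultimately show ?thesis using CH[OF n] by blast
qed

lemma HL:
  assumes n: "1 \<le> n" and L: "2 \<le> L" and len: "length u = L" and w: "wf_lab L n u"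
    and i: "i < L" and ui: "u!i = Some k" and un: "u!(prv L i) = None"
  shows "wf_lab L n (u[prv L i := Some k, i := None])"
proof -
  have g: "good n (labs u)" using CH[OF n len] w by simp
  have "good n (labs (u[prv L i := Some k, i := None]))"
  proof (cases "i = 0")
    case False
    then have pv: "prv L i = i - 1" using prv_eq i by simp
    have si: "Suc (i - 1) < length u" using False i len by simp
    define A where "A = take (i - 1) u"
    define C where "C = drop (Suc (Suc (i - 1))) u"
    have u: "u = A @ None # Some k # C" using split2[OF si] ui un pv A_def C_def False by simp
    have la: "length A = i - 1" using A_def i len by simp
    have "u[prv L i := Some k, i := None] = A @ Some k # None # C"
      using u la pv False by (simp add: list_update_append)
    then show ?thesis using g u by simp
  next
    case True
    then have pv: "prv L i = L - 1" using prv_eq i by simp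
    obtain M where u: "u = u!0 # M @ [u!(length u - 1)]" using split_ends len L by blast
    have e1: "u ! 0 = Some k" using ui True by simp
    have e2: "u ! (length u - 1) = None" using un pv len by simp
    have u2: "u = Some k # M @ [None]" using u unfolding e1 e2 .
    have lM: "length M = L - 2"
    proof -
      have "length u = length M + 2" by (subst u2) simp
      then show ?thesis using len by simp
    qed
    have "(Some k # M @ [None])[Suc (length M) := Some k, 0 := None] = None # M @ [Some k]"
      by (simp add: list_update_append)
    moreover have "L - 1 = Suc (length M)" using lM L by simp
    ultimately have "u[prv L i := Some k, i := None] = None # M @ [Some k]"
      using u2 pv True by simp
    then show ?thesis using g u2 good_cons[OF n] by simp
  qed
  moreover have "length (u[prv L i := Some k, i := None]) = L" using len by simp
  ultimately show ?thesis using CH[OF n] by blast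
qed




lemma plab_inj: "plab x = plab y \<Longrightarrow> x = y"
  by (cases x; cases y) auto

lemma Psi_len: "\<psi> \<in> Psi L n \<Longrightarrow> length \<psi> = L"
  unfolding Psi_def wf_lab_def by simp

lemma Psi_wf: "\<psi> \<in> Psi L n \<Longrightarrow> wf_lab L n (map plab \<psi>)"
  unfolding Psi_def by simp

lemma Psi_lab: "\<psi> \<in> Psi L n \<Longrightarrow> i < L \<Longrightarrow> \<psi> ! i = PPt k \<Longrightarrow> k < n"
  unfolding Psi_def wf_lab_def by force

lemma pmove_cases:
  assumes L: "2 \<le> L" and i: "i < 2 * L" and len: "length \<psi> = L"
    and pm: "pmove L p q \<psi> i = Some (t, r)"
  shows "(\<exists>k. i < L \<and> \<psi> ! i = PPt k \<and> \<psi> ! nxt L i = Vac \<and> t = \<psi>[i := Vac, nxt L i := PPt k] \<and> r = p k)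
       \<or> (\<exists>k. L \<le> i \<and> \<psi> ! (i - L) = PPt k \<and> \<psi> ! prv L (i - L) = Vac
            \<and> t = \<psi>[prv L (i - L) := PPt k, i - L := Vac] \<and> r = q k)"
proof (cases "i < L")
  case True
  then have "i div L = 0" "i mod L = i" by auto
  then show ?thesis using pm True unfolding pmove_def
    by (auto split: pletter.splits)
next
  case False
  then have "i div L = 1" "i mod L = i - L" using i
    by (auto simp: div_if mod_if)
  then show ?thesis using pm False unfolding pmove_def Let_def
    by (auto split: pletter.splits)
qed

lemma pmove_right:
  assumes "pos < L" "\<psi> ! pos = PPt k" "\<psi> ! nxt L pos = Vac"
  shows "pmove L p q \<psi> pos = Some (\<psi>[pos := Vac, nxt L pos := PPt k], p k)"
  using assms unfolding pmove_def by simp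

lemma pmove_left:
  assumes "pos < L" "\<psi> ! prv L pos = Vac" "\<psi> ! pos = PPt k"
  shows "pmove L p q \<psi> (L + pos) = Some (\<psi>[prv L pos := PPt k, pos := Vac], q k)"
proof -
  have "(L + pos) div L = 1" "(L + pos) mod L = pos" using assms(1) by auto
  then show ?thesis using assms unfolding pmove_def by simp
qed

lemma pmove_Psi:
  assumes n: "1 \<le> n" and L: "2 \<le> L" and ps: "\<psi> \<in> Psi L n" and i: "i < 2 * L"
    and pm: "pmove L p q \<psi> i = Some (t, r)"
    and pos: "\<forall>k<n. 0 < p k \<and> 0 < q k"
  shows "t \<in> Psi L n" "t \<noteq> \<psi>" "0 < r"
proof -
  have len: "length \<psi> = L" using Psi_len ps by simp
  have w: "wf_lab L n (map plab \<psi>)" using Psi_wf ps by simp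
  have L0: "0 < L" using L by simp
  from pmove_cases[OF L i len pm] have "t \<in> Psi L n \<and> t \<noteq> \<psi> \<and> 0 < r"
  proof
    assume "\<exists>k. i < L \<and> \<psi> ! i = PPt k \<and> \<psi> ! nxt L i = Vac \<and> t = \<psi>[i := Vac, nxt L i := PPt k] \<and> r = p k"
    then obtain k where k: "i < L" "\<psi> ! i = PPt k" "\<psi> ! nxt L i = Vac" "t = \<psi>[i := Vac, nxt L i := PPt k]" "r = p k" by blast
    have ni: "nxt L i \<noteq> i" using k(2,3) by auto
    have "map plab t = (map plab \<psi>)[i := None, nxt L i := Some k]" using k(4) by (simp add: map_update)
    moreover have "wf_lab L n ((map plab \<psi>)[i := None, nxt L i := Some k])"
      by (rule HR[OF n L _ w k(1)]) (use len k nxt_lt[OF L0] in auto)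
    ultimately have "t \<in> Psi L n" unfolding Psi_def by simp
    moreover have "t ! i = Vac" using k ni len by simp
    then have "t \<noteq> \<psi>" using k by auto
    moreover have "0 < r" using k pos Psi_lab[OF ps k(1) k(2)] by simp
    ultimately show ?thesis by simp
  next
    assume "\<exists>k. L \<le> i \<and> \<psi> ! (i - L) = PPt k \<and> \<psi> ! prv L (i - L) = Vac
            \<and> t = \<psi>[prv L (i - L) := PPt k, i - L := Vac] \<and> r = q k"
    then obtain k where k: "L \<le> i" "\<psi> ! (i - L) = PPt k" "\<psi> ! prv L (i - L) = Vac"
       "t = \<psi>[prv L (i - L) := PPt k, i - L := Vac]" "r = q k" by blast
    have il: "i - L < L" using i k(1) by simp
    have ni: "prv L (i - L) \<noteq> i - L" using k(2,3) by auto
    have "map plab t = (map plab \<psi>)[prv L (i - L) := Some k, i - L := None]" using k(4) by (simp add: map_update)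
    moreover have "wf_lab L n ((map plab \<psi>)[prv L (i - L) := Some k, i - L := None])"
      by (rule HL[OF n L _ w il]) (use len k prv_lt[OF L0] il in auto)
    ultimately have "t \<in> Psi L n" unfolding Psi_def by simp
    moreover have "t ! (i - L) = Vac" using k ni len il by simp
    then have "t \<noteq> \<psi>" using k by auto
    moreover have "0 < r" using k pos Psi_lab[OF ps il k(2)] by simp
    ultimately show ?thesis by simp
  qed
  then show "t \<in> Psi L n" "t \<noteq> \<psi>" "0 < r" by auto
qed

lemma pmove_nn:
  assumes n: "1 \<le> n" and L: "2 \<le> L" and ps: "\<psi> \<in> Psi L n"
    and pos: "\<forall>k<n. 0 < p k \<and> 0 < q k"
  shows "i < 2 * L \<Longrightarrow> pmove L p q \<psi> i = Some (t, r) \<Longrightarrow> 0 \<le> r"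
  using pmove_Psi(3)[OF n L ps _ _ pos] less_imp_le by blast

lemma QPsi_nonneg:
  assumes n: "1 \<le> n" and L: "2 \<le> L" and ps: "\<psi> \<in> Psi L n"
    and pos: "\<forall>k<n. 0 < p k \<and> 0 < q k"
  shows "0 \<le> QPsi L p q \<psi> \<psi>'"
  unfolding QPsi_def trate_def
proof (rule sum_nonneg)
  fix i assume "i \<in> {..<2 * L}"
  then show "0 \<le> (case pmove L p q \<psi> i of None \<Rightarrow> 0 | Some (t, r) \<Rightarrow> if t = \<psi>' then r else 0)"
    using pmove_nn[OF n L ps pos, of i] by (auto split: option.splits)
qed

lemma QPsi_pos:
  assumes n: "1 \<le> n" and L: "2 \<le> L" and ps: "\<psi> \<in> Psi L n"
    and pos: "\<forall>k<n. 0 < p k \<and> 0 < q k"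
    and i: "i < 2 * L" and pm: "pmove L p q \<psi> i = Some (t, r)"
  shows "0 < QPsi L p q \<psi> t"
  unfolding QPsi_def trate_def
proof -
  let ?f = "\<lambda>i. case pmove L p q \<psi> i of None \<Rightarrow> 0 | Some (t', r) \<Rightarrow> if t' = t then r else 0"
  have "0 < ?f i" using pm pmove_Psi(3)[OF n L ps i pm pos] by simp
  also have "?f i \<le> sum ?f {..<2 * L}"
    by (rule member_le_sum) (use i pmove_nn[OF n L ps pos] in \<open>auto split: option.splits\<close>)
  finally show "0 < sum ?f {..<2 * L}" .
qed




definition canon :: "nat \<Rightarrow> nat \<Rightarrow> pletter list" where
  "canon L n = map (\<lambda>i. if i < n then PPt i else Vac) [0..<L]"

definition gg :: "nat \<Rightarrow> nat option \<Rightarrow> nat" where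
  "gg x v = (if v \<noteq> None then x else 0)"

definition possum :: "nat option list \<Rightarrow> nat" where
  "possum u = (\<Sum>x<length u. gg x (u!x))"

definition PhiU :: "nat \<Rightarrow> nat option list \<Rightarrow> nat" where
  "PhiU n u = possum u + length u * ((n - hd (labs u)) mod n)"

lemma sum_two: "a \<in> A \<Longrightarrow> b \<in> A \<Longrightarrow> a \<noteq> b \<Longrightarrow> finite A \<Longrightarrow>
   sum h A = h a + h b + sum h (A - {a, b})"
proof -
  assume a: "a \<in> A" "b \<in> A" "a \<noteq> b" "finite A"
  have "sum h A = h a + sum h (A - {a})" using a by (simp add: sum.remove)
  also have "sum h (A - {a}) = h b + sum h (A - {a} - {b})" using a by (intro sum.remove) auto
  also have "A - {a} - {b} = A - {a, b}" by auto
  finally show ?thesis by (simp add: add.assoc)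
qed

lemma possum_upd2:
  assumes "a < length u" "b < length u" "a \<noteq> b"
  shows "possum (u[a := va, b := vb]) + gg a (u!a) + gg b (u!b) = possum u + gg a va + gg b vb"
proof -
  let ?u' = "u[a := va, b := vb]"
  let ?A = "{..<length u}"
  have "possum ?u' = gg a (?u'!a) + gg b (?u'!b) + (\<Sum>x\<in>?A - {a,b}. gg x (?u'!x))"
    unfolding possum_def using assms by (simp add: sum_two[of a _ b])
  moreover have "possum u = gg a (u!a) + gg b (u!b) + (\<Sum>x\<in>?A - {a,b}. gg x (u!x))"
    unfolding possum_def using assms by (simp add: sum_two[of a _ b])
  moreover have "(\<Sum>x\<in>?A - {a,b}. gg x (?u'!x)) = (\<Sum>x\<in>?A - {a,b}. gg x (u!x))"
    by (rule sum.cong) auto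
  moreover have "?u'!a = va" "?u'!b = vb" using assms by auto
  ultimately show ?thesis by simp
qed

lemma labs_hop_inner:
  assumes "Suc i < length u" "u!i = None" "u!(Suc i) = Some k"
  shows "labs (u[i := Some k, Suc i := None]) = labs u"
proof -
  define A where "A = take i u"
  define C where "C = drop (Suc (Suc i)) u"
  have u: "u = A @ None # Some k # C" using split2[OF assms(1)] assms A_def C_def by simp
  have la: "length A = i" using A_def assms by simp
  have "u[i := Some k, Suc i := None] = A @ Some k # None # C"
    using u la by (simp add: list_update_append)
  then show ?thesis using u by simp
qed

lemma labs_hop_wrap:
  assumes "2 \<le> length u" "u!0 = Some k" "u!(length u - 1) = None"
  shows "\<exists>M. labs u = k # labs M \<and> labs (u[length u - 1 := Some k, 0 := None]) = labs M @ [k]"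
proof -
  obtain M where u: "u = u!0 # M @ [u!(length u - 1)]" using split_ends assms by blast
  have u2: "u = Some k # M @ [None]" using u unfolding assms(2,3) .
  have lM: "length u = Suc (Suc (length M))" by (subst u2) simp
  have "(Some k # M @ [None])[Suc (length M) := Some k, 0 := None] = None # M @ [Some k]"
    by (simp add: list_update_append)
  then have "u[length u - 1 := Some k, 0 := None] = None # M @ [Some k]"
    using lM u2 by simp
  then show ?thesis using u2 by (intro exI[of _ M]) simp
qed

lemma PhiU_dec:
  assumes n: "1 \<le> n" and L: "2 \<le> length u" and w: "wf_lab (length u) n u"
    and i: "i < length u" and ui: "u!i = Some k" and up: "u!(prv (length u) i) = None"
    and c: "i \<noteq> 0 \<or> k \<noteq> 0"
  shows "PhiU n (u[prv (length u) i := Some k, i := None]) + 1 = PhiU n u"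
proof -
  let ?L = "length u"
  let ?u' = "u[prv ?L i := Some k, i := None]"
  have L0: "0 < ?L" using L by linarith
  have pl: "prv ?L i < ?L" using prv_lt[OF L0] .
  have pn: "prv ?L i \<noteq> i" using ui up by auto
  have ps: "possum ?u' + gg (prv ?L i) (u ! prv ?L i) + gg i (u!i) = possum u + gg (prv ?L i) (Some k) + gg i None"
    using possum_upd2[OF pl i pn] .
  have g: "good n (labs u)" using CH[OF n refl] w by simp
  show ?thesis
  proof (cases "i = 0")
    case False
    then have pv: "prv ?L i = i - 1" using prv_eq i by simp
    have "labs ?u' = labs u"
      using labs_hop_inner[of "i - 1" u k] False i ui up pv by simp
    moreover have "possum ?u' + 1 = possum u" using ps pv False up ui unfolding gg_def by simp
    ultimately show ?thesis unfolding PhiU_def by simp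
  next
    case True
    then have k0: "k \<noteq> 0" using c by simp
    have pv: "prv ?L i = ?L - 1" using prv_eq i True by simp
    obtain M where M: "labs u = k # labs M" "labs (u[?L - 1 := Some k, 0 := None]) = labs M @ [k]"
      using labs_hop_wrap[OF L] ui up True pv by auto
    obtain r where r: "r < n" "labs u = map (\<lambda>j. (j + r) mod n) [0..<n]" using g good_def by auto
    have "labs u ! 0 = (0 + r) mod n" unfolding r(2) using n by simp
    then have kr: "k = r" using M(1) r(1) by simp
    have n2: "2 \<le> n" using k0 kr r by simp
    have "labs M = tl (labs u)" using M(1) by simp
    also have "\<dots> = map (\<lambda>j. (j + r) mod n) [1..<n]" unfolding r(2)
      by (simp add: map_tl[symmetric])
    finally have lM: "labs M = map (\<lambda>j. (j + r) mod n) [1..<n]" .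
    have hM: "hd (labs M @ [k]) = Suc r mod n" using lM n2 by (simp add: upt_conv_Cons)
    have possum': "possum ?u' = possum u + (?L - 1)" using ps pv True up ui unfolding gg_def by simp
    have arith: "?L * ((n - Suc r mod n) mod n) + ?L = ?L * ((n - r) mod n)"
    proof (cases "Suc r < n")
      case True
      then have "(n - Suc r mod n) mod n = n - Suc r" "(n - r) mod n = n - r" using kr k0 by auto
      moreover have "n - r = Suc (n - Suc r)" using True by simp
      ultimately show ?thesis by simp
    next
      case False
      then have "Suc r = n" using r by simp
      then have "(n - Suc r mod n) mod n = 0" "(n - r) mod n = 1" using n2 by auto
      then show ?thesis by simp
    qed
    have "labs ?u' = labs M @ [k]" using M(2) pv True by simp
    then show ?thesis unfolding PhiU_def using possum' hM arith M(1) kr L by simp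
  qed
qed





lemma plab_Some: "plab x = Some k \<longleftrightarrow> x = PPt k" by (cases x) auto
lemma plab_None: "plab x = None \<longleftrightarrow> x = Vac" by (cases x) auto

lemma good_pos:
  assumes n: "1 \<le> n" and nL: "n < L" and psi: "\<psi> \<in> Psi L n" and ne: "\<psi> \<noteq> canon L n"
  shows "\<exists>pos<L. \<exists>k. \<psi>!pos = PPt k \<and> \<psi>!(prv L pos) = Vac \<and> (pos \<noteq> 0 \<or> k \<noteq> 0)"
proof (rule ccontr)
  assume H0: "\<not> ?thesis"
  define u where "u = map plab \<psi>"
  have lenp: "length \<psi> = L" using Psi_len psi by simp
  have len: "length u = L" using lenp u_def by simp
  have L0: "0 < L" using nL by simp
  have H: "pos = 0 \<and> k = 0" if "pos < L" "u!pos = Some k" "u!(prv L pos) = None" for pos k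
  proof -
    have "\<psi>!pos = PPt k" using that u_def lenp by (simp add: plab_Some)
    moreover have "\<psi>!(prv L pos) = Vac" using that u_def lenp prv_lt[OF L0] by (simp add: plab_None)
    ultimately show ?thesis using H0 that by blast
  qed
  have w: "wf_lab L n u" using Psi_wf psi u_def by simp
  have g: "good n (labs u)" using CH[OF n len] w by simp
  obtain r where r: "r < n" "labs u = map (\<lambda>j. (j + r) mod n) [0..<n]" using g good_def by auto
  have lp: "length (ps u) = n" using r(2) length_labs by (metis length_map length_upt minus_nat.diff_0)
  have P: "ps u ! j = j" if "j < n" for j
    using that
  proof (induction j)
    case 0
    show ?case
    proof (rule ccontr)
      assume a: "ps u ! 0 \<noteq> 0"
      define pos where "pos = ps u ! 0"
      have pl: "pos < L" using ps_nth_lt[of 0 u] lp 0 len pos_def by simp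
      have s: "u!pos = Some (labs u ! 0)" using ps_nth_some[of 0 u] lp 0 pos_def by simp
      have pv: "prv L pos = pos - 1" using prv_eq[OF pl] a pos_def by simp
      have "u!(pos - 1) = None" using ps_before[of u "pos - 1"] lp 0 a pos_def by simp
      then show False using H[OF pl s] pv a pos_def by simp
    qed
  next
    case (Suc j)
    then have ij: "ps u ! j = j" by simp
    define pos where "pos = ps u ! Suc j"
    have gt: "j < pos" using ps_mono[of j u "Suc j"] lp Suc.prems ij pos_def by simp
    show ?case
    proof (rule ccontr)
      assume a: "ps u ! Suc j \<noteq> Suc j"
      have pl: "pos < L" using ps_nth_lt[of "Suc j" u] lp Suc.prems len pos_def by simp
      have s: "u!pos = Some (labs u ! Suc j)" using ps_nth_some[of "Suc j" u] lp Suc.prems pos_def by simp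
      have pv: "prv L pos = pos - 1" using prv_eq[OF pl] gt by simp
      have "u!(pos - 1) = None" using ps_between[of j u "pos - 1"] lp Suc.prems a gt ij pos_def by simp
      then show False using H[OF pl s] pv gt by simp
    qed
  qed
  have l0: "labs u ! 0 = r" using r n by simp
  have u0: "u!0 = Some r" using ps_nth_some[of 0 u] P[of 0] n lp l0 by simp
  have pv0: "prv L 0 = L - 1" using prv_eq[OF L0] by simp
  have lastp: "ps u ! (length (ps u) - 1) = n - 1" using P[of "n - 1"] lp n by simp
  have uL: "u!(L - 1) = None" using ps_after[of u "L - 1"] lastp lp n nL len by simp
  have r0: "r = 0" using H[OF L0 u0] pv0 uL by simp
  have ux: "u!x = (if x < n then Some x else None)" if "x < L" for x
  proof (cases "x < n")
    case True
    then have "u!x = Some (labs u ! x)" using ps_nth_some[of x u] P[of x] lp by simp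
    then show ?thesis using True r r0 by simp
  next
    case False
    then show ?thesis using ps_after[of u x] lastp lp n that len by simp
  qed
  have "\<psi> = canon L n"
  proof (rule nth_equalityI)
    show "length \<psi> = length (canon L n)" using lenp canon_def by simp
  next
    fix x assume x: "x < length \<psi>"
    then have "plab (\<psi>!x) = u!x" using u_def by simp
    also have "\<dots> = plab (canon L n ! x)" using ux[of x] x lenp unfolding canon_def by simp
    finally show "\<psi>!x = canon L n ! x" by (rule plab_inj)
  qed
  then show False using ne by simp
qed

lemma reach:
  assumes n: "1 \<le> n" and nL: "n < L" and pos: "\<forall>k<n. 0 < p k \<and> 0 < q k"
  shows "\<psi> \<in> Psi L n \<Longrightarrow> (\<lambda>a b. b \<in> Psi L n \<and> b \<noteq> a \<and> 0 < QPsi L p q a b)\<^sup>*\<^sup>* \<psi> (canon L n)"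
proof -
  let ?R = "\<lambda>a b. b \<in> Psi L n \<and> b \<noteq> a \<and> 0 < QPsi L p q a b"
  have L: "2 \<le> L" using n nL by simp
  have L0: "0 < L" using nL by simp
  have "\<forall>\<psi>. PhiU n (map plab \<psi>) = m \<longrightarrow> \<psi> \<in> Psi L n \<longrightarrow> ?R\<^sup>*\<^sup>* \<psi> (canon L n)" for m
  proof (induction m rule: less_induct)
    case (less m)
    show ?case
    proof (intro allI impI)
      fix \<psi> assume m: "PhiU n (map plab \<psi>) = m" and psi: "\<psi> \<in> Psi L n"
      show "?R\<^sup>*\<^sup>* \<psi> (canon L n)"
      proof (cases "\<psi> = canon L n")
        case True then show ?thesis by simp
      next
        case False
        obtain ps k where pk: "ps < L" "\<psi>!ps = PPt k" "\<psi>!(prv L ps) = Vac" "ps \<noteq> 0 \<or> k \<noteq> 0"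
          using good_pos[OF n nL psi False] by blast
        define \<psi>' where "\<psi>' = \<psi>[prv L ps := PPt k, ps := Vac]"
        have pm: "pmove L p q \<psi> (L + ps) = Some (\<psi>', q k)"
          using pmove_left[OF pk(1,3,2)] \<psi>'_def by simp
        have i2: "L + ps < 2 * L" using pk by simp
        have R: "?R \<psi> \<psi>'" using pmove_Psi[OF n L psi i2 pm pos] QPsi_pos[OF n L psi pos i2 pm] by simp
        have lenp: "length \<psi> = L" using Psi_len psi by simp
        have mp: "map plab \<psi>' = (map plab \<psi>)[prv L ps := Some k, ps := None]"
          using \<psi>'_def by (simp add: map_update)
        have "PhiU n ((map plab \<psi>)[prv (length (map plab \<psi>)) ps := Some k, ps := None]) + 1 = PhiU n (map plab \<psi>)"
          by (rule PhiU_dec[OF n]) (use lenp L Psi_wf[OF psi] pk prv_lt[OF L0] in auto)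
        then have "PhiU n (map plab \<psi>') < m" using mp lenp m by simp
        then have "?R\<^sup>*\<^sup>* \<psi>' (canon L n)" using less R by blast
        then show ?thesis using R by (rule converse_rtranclp_into_rtranclp[rotated])
      qed
    qed
  qed
  then show "\<psi> \<in> Psi L n \<Longrightarrow> ?R\<^sup>*\<^sup>* \<psi> (canon L n)" by blast
qed





definition balanced :: "'s set \<Rightarrow> ('s \<Rightarrow> 's \<Rightarrow> real) \<Rightarrow> ('s \<Rightarrow> real) \<Rightarrow> bool" where
  "balanced S Q \<nu> \<longleftrightarrow> (\<forall>s\<in>S. (\<Sum>s'\<in>S - {s}. \<nu> s * Q s s') = (\<Sum>s'\<in>S - {s}. \<nu> s' * Q s' s))"

lemma pos_step:
  assumes fin: "finite S" and Qnn: "\<forall>s\<in>S. \<forall>s'\<in>S. 0 \<le> Q s s'" and bal: "balanced S Q \<nu>"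
    and s: "s \<in> S" and s': "s' \<in> S" and ne: "s \<noteq> s'" and pos: "0 < \<nu> s'" and Qp: "0 < Q s' s"
  shows "0 < \<nu> s"
proof -
  define \<rho> where "\<rho> = (\<lambda>x. max (\<nu> x) 0)"
  define out where "out = (\<lambda>x. \<Sum>y\<in>S - {x}. Q x y)"
  define inr where "inr = (\<lambda>x. \<Sum>y\<in>S - {x}. \<rho> y * Q y x)"
  have rnn: "\<And>x. 0 \<le> \<rho> x" unfolding \<rho>_def by simp
  have outnn: "0 \<le> out x" if x: "x \<in> S" for x
    unfolding out_def
  proof (rule sum_nonneg)
    fix y assume "y \<in> S - {x}"
    then show "0 \<le> Q x y" using Qnn x by simp
  qed
  have termnn: "0 \<le> \<rho> y * Q y x" if "x \<in> S" "y \<in> S" for x y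
    using rnn[of y] Qnn that by simp
  have inrnn: "0 \<le> inr x" if x: "x \<in> S" for x
    unfolding inr_def
  proof (rule sum_nonneg)
    fix y assume "y \<in> S - {x}"
    then show "0 \<le> \<rho> y * Q y x" using termnn x by simp
  qed
  have ineq: "\<rho> x * out x \<le> inr x" if x: "x \<in> S" for x
  proof (cases "0 \<le> \<nu> x")
    case True
    have "\<rho> x * out x = (\<Sum>y\<in>S - {x}. \<nu> x * Q x y)" unfolding \<rho>_def out_def using True
      by (simp add: sum_distrib_left)
    also have "\<dots> = (\<Sum>y\<in>S - {x}. \<nu> y * Q y x)" using bal x unfolding balanced_def by (rule bspec)
    also have "\<dots> \<le> inr x" unfolding inr_def
    proof (rule sum_mono)
      fix y assume y: "y \<in> S - {x}"
      then have "0 \<le> Q y x" using Qnn x by simp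
      moreover have "\<nu> y \<le> \<rho> y" unfolding \<rho>_def by simp
      ultimately show "\<nu> y * Q y x \<le> \<rho> y * Q y x" by (rule mult_right_mono[rotated])
    qed
    finally show ?thesis .
  next
    case False
    then have "\<rho> x = 0" unfolding \<rho>_def by simp
    then show ?thesis using inrnn x by simp
  qed
  have sumeq: "(\<Sum>x\<in>S. inr x) = (\<Sum>x\<in>S. \<rho> x * out x)"
  proof -
    have e: "\<And>x. S - {x} = {y \<in> S. y \<noteq> x}" by auto
    have "(\<Sum>x\<in>S. inr x) = (\<Sum>x\<in>S. \<Sum>y\<in>{y \<in> S. y \<noteq> x}. \<rho> y * Q y x)" unfolding inr_def e ..
    also have "\<dots> = (\<Sum>y\<in>S. \<Sum>x\<in>{x \<in> S. y \<noteq> x}. \<rho> y * Q y x)"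
      by (rule sum.swap_restrict[OF fin fin])
    also have "\<dots> = (\<Sum>y\<in>S. \<rho> y * out y)"
    proof (rule sum.cong)
      fix y assume "y \<in> S"
      have "{x \<in> S. y \<noteq> x} = S - {y}" by auto
      then show "(\<Sum>x\<in>{x \<in> S. y \<noteq> x}. \<rho> y * Q y x) = \<rho> y * out y"
        unfolding out_def by (simp add: sum_distrib_left)
    qed simp
    finally show ?thesis .
  qed
  have eq: "\<forall>x\<in>S. inr x - \<rho> x * out x = 0"
  proof -
    have "(\<Sum>x\<in>S. inr x - \<rho> x * out x) = 0" using sumeq by (simp add: sum_subtractf)
    moreover have "\<forall>x\<in>S. 0 \<le> inr x - \<rho> x * out x" using ineq by simp
    ultimately show ?thesis using sum_nonneg_eq_0_iff[OF fin, of "\<lambda>x. inr x - \<rho> x * out x"] by simp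
  qed
  have "\<rho> s' * Q s' s \<le> inr s" unfolding inr_def
  proof (rule member_le_sum)
    show "s' \<in> S - {s}" using s' ne by simp
    show "finite (S - {s})" using fin by simp
    fix y assume "y \<in> S - {s} - {s'}"
    then show "0 \<le> \<rho> y * Q y s" using termnn s by simp
  qed
  moreover have "0 < \<rho> s' * Q s' s" using pos Qp unfolding \<rho>_def by simp
  moreover have "inr s = \<rho> s * out s" using eq s by simp
  ultimately have p: "0 < \<rho> s * out s" by linarith
  have "0 < \<rho> s"
  proof (rule ccontr)
    assume "\<not> 0 < \<rho> s"
    then have "\<rho> s = 0" using rnn[of s] by simp
    then show False using p by simp
  qed
  then show ?thesis unfolding \<rho>_def by simp
qed

lemma pos_path:
  assumes fin: "finite S" and Qnn: "\<forall>s\<in>S. \<forall>s'\<in>S. 0 \<le> Q s s'" and bal: "balanced S Q \<nu>"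
  shows "(\<lambda>a b. b \<in> S \<and> b \<noteq> a \<and> 0 < Q a b)\<^sup>*\<^sup>* a b \<Longrightarrow> a \<in> S \<Longrightarrow> 0 < \<nu> a \<Longrightarrow> b \<in> S \<and> 0 < \<nu> b"
proof (induction rule: rtranclp_induct)
  case base then show ?case by simp
next
  case (step y z)
  then show ?case using pos_step[OF fin Qnn bal, of z y] by auto
qed

lemma uniq:
  fixes S :: "'s set" and Q :: "'s \<Rightarrow> 's \<Rightarrow> real"
  assumes fin: "finite S" and Qnn: "\<forall>s\<in>S. \<forall>s'\<in>S. 0 \<le> Q s s'"
    and st1: "stationary S Q \<pi>" and st2: "stationary S Q \<mu>"
    and reach: "\<forall>s\<in>S. (\<lambda>a b. b \<in> S \<and> b \<noteq> a \<and> 0 < Q a b)\<^sup>*\<^sup>* s c"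
  shows "\<forall>s\<in>S. \<pi> s = \<mu> s"
proof -
  define \<nu> where "\<nu> = (\<lambda>s. \<pi> s - \<mu> s)"
  have bal: "balanced S Q \<nu>" unfolding balanced_def
  proof
    fix s assume s: "s \<in> S"
    have a: "(\<Sum>s'\<in>S - {s}. \<pi> s * Q s s') = (\<Sum>s'\<in>S - {s}. \<pi> s' * Q s' s)"
      using st1 s unfolding stationary_def by auto
    have b: "(\<Sum>s'\<in>S - {s}. \<mu> s * Q s s') = (\<Sum>s'\<in>S - {s}. \<mu> s' * Q s' s)"
      using st2 s unfolding stationary_def by auto
    show "(\<Sum>s'\<in>S - {s}. \<nu> s * Q s s') = (\<Sum>s'\<in>S - {s}. \<nu> s' * Q s' s)"
      unfolding \<nu>_def using a b by (simp add: left_diff_distrib sum_subtractf)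
  qed
  have baln: "balanced S Q (\<lambda>s. - \<nu> s)" using bal unfolding balanced_def
    by (simp add: sum_negf)
  have sum0: "(\<Sum>s\<in>S. \<nu> s) = 0" using st1 st2 unfolding stationary_def \<nu>_def
    by (simp add: sum_subtractf)
  show ?thesis
  proof (rule ccontr)
    assume "\<not> ?thesis"
    then obtain s where s: "s \<in> S" "\<nu> s \<noteq> 0" unfolding \<nu>_def by auto
    have ex_both: "(\<exists>x\<in>S. 0 < \<nu> x) \<and> (\<exists>x\<in>S. \<nu> x < 0)"
    proof (rule ccontr)
      assume "\<not> ?thesis"
      then have "(\<forall>x\<in>S. \<nu> x \<le> 0) \<or> (\<forall>x\<in>S. 0 \<le> \<nu> x)" by force
      then show False
      proof
        assume h: "\<forall>x\<in>S. \<nu> x \<le> 0"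
        have "(\<Sum>x\<in>S. - \<nu> x) = 0" using sum0 by (simp add: sum_negf)
        moreover have "\<forall>x\<in>S. 0 \<le> - \<nu> x" using h by simp
        ultimately have "\<forall>x\<in>S. - \<nu> x = 0" using sum_nonneg_eq_0_iff[OF fin, of "\<lambda>x. - \<nu> x"] by simp
        then show False using s by simp
      next
        assume h: "\<forall>x\<in>S. 0 \<le> \<nu> x"
        then have "\<forall>x\<in>S. \<nu> x = 0" using sum_nonneg_eq_0_iff[OF fin, of \<nu>] sum0 by simp
        then show False using s by simp
      qed
    qed
    then obtain x y where xy: "x \<in> S" "0 < \<nu> x" "y \<in> S" "\<nu> y < 0" by blast
    have "c \<in> S \<and> 0 < \<nu> c"
      by (rule pos_path[OF fin Qnn bal, of x c]) (use reach xy in auto)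
    moreover have "c \<in> S \<and> 0 < - \<nu> c"
      by (rule pos_path[OF fin Qnn baln, of y c]) (use reach xy in auto)
    ultimately show False by simp
  qed
qed





lemma disj_helper: "A \<or> B \<Longrightarrow> (B \<Longrightarrow> C) \<Longrightarrow> A \<or> C" by blast

lemma T2_arith:
  fixes L j d x a t :: nat
  assumes "2 \<le> L" "j < L" "x < L" "0 < d" "d \<le> L" "a = (if d \<le> j then j-d else j+L-d)"
    "x \<noteq> (if Suc j = L then 0 else Suc j)" "t = (if x \<le> a then x+L-a else x-a)"
  shows "t = 1 \<Longrightarrow> x = j \<or> (x<j \<and> j-x<d) \<or> (j<x \<and> j+L-x<d)"
    and "2 \<le> t \<Longrightarrow> t \<le> d \<Longrightarrow> x = j \<or> (x<j \<and> j-x<d) \<or> (j<x \<and> j+L-x<d)"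
    and "2 \<le> t \<Longrightarrow> t \<le> d \<Longrightarrow> ((if x = 0 then L-1 else x-1)<j \<and> j-(if x = 0 then L-1 else x-1)<d) \<or> (j<(if x = 0 then L-1 else x-1) \<and> j+L-(if x = 0 then L-1 else x-1)<d)"
    and "\<not> t \<le> d \<Longrightarrow> x \<noteq> j"
  using assms by (auto split: if_splits)

lemma prev_facts:
  assumes len: "length u = L" and L0: "0 < L" and j: "j < L" and uj: "u!j \<noteq> None"
  shows "0 < prev_dist L u j" "prev_dist L u j \<le> L"
    "\<And>y. y < L \<Longrightarrow> (y<j \<and> j-y < prev_dist L u j) \<or> (j<y \<and> j+L-y < prev_dist L u j) \<Longrightarrow> u!y = None"
proof -
  define P where "P = (\<lambda>d. 0 < d \<and> u ! ((j + L - d) mod L) \<noteq> None)"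
  have PL: "P L" unfolding P_def using L0 j uj by simp
  have pd: "prev_dist L u j = (LEAST d. P d)" unfolding prev_dist_def P_def by simp
  show "0 < prev_dist L u j" using LeastI[of P L, OF PL] pd P_def by simp
  show "prev_dist L u j \<le> L" using Least_le[of P L, OF PL] pd by simp
  fix y assume y: "y < L" and c: "(y<j \<and> j-y < prev_dist L u j) \<or> (j<y \<and> j+L-y < prev_dist L u j)"
  define e where "e = (if y < j then j - y else j + L - y)"
  have e: "0 < e" "e < prev_dist L u j" using c y unfolding e_def by auto
  have "(j + L - e) mod L = y"
  proof (cases "y < j")
    case True
    then have "j + L - e = y + L" unfolding e_def by simp
    then show ?thesis using y by simp
  next
    case False
    then have "j + L - e = y" unfolding e_def using c y by auto
    then show ?thesis using y by simp
  qed
  moreover have "\<not> P e" using not_less_Least[of e P] e pd by simp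
  ultimately show "u!y = None" using e unfolding P_def by simp
qed

lemma T2_res:
  assumes n: "1 \<le> n" and L: "2 \<le> L" and len: "length w = L" and j: "j < L"
    and wj: "w!j = Pt k" and wn: "w!(nxt L j) = Bx k"
    and box: "\<forall>x<L. \<forall>m. w!x = Bx m \<longrightarrow> m < n"
  shows "\<exists>w'. T2 L n p w j = Some (w', p k) \<and> length w' = L
     \<and> map olab w' = (map olab w)[j := None, nxt L j := Some k]
     \<and> (\<forall>x<L. \<forall>m. w'!x = Bx m \<longrightarrow> m < n)"
proof -
  define u where "u = map olab w"
  define d where "d = prev_dist L u j"
  define a where "a = (j + L - d) mod L"
  define F where "F = (\<lambda>x. if x = nxt L j then Pt k
                         else let t = (x + L - Suc a) mod L + 1 in
                           if t = 1 then Bx ((k + n - 1) mod n)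
                           else if 2 \<le> t \<and> t \<le> d then w ! prv L x
                           else w ! x)"
  have L0: "0 < L" using L by simp
  have lu: "length u = L" using len u_def by simp
  have uj: "u!j = Some k" using wj j len u_def by simp
  have d: "0 < d" "d \<le> L" using prev_facts[OF lu L0 j] uj d_def by auto
  have dn: "\<And>y. y < L \<Longrightarrow> (y<j \<and> j-y < d) \<or> (j<y \<and> j+L-y < d) \<Longrightarrow> u!y = None"
    using prev_facts(3)[OF lu L0 j] uj d_def by auto
  have T: "T2 L n p w j = Some (map F [0..<L], p k)"
    unfolding T2_def F_def a_def d_def u_def using wj wn by (simp add: Let_def)
  have aexp: "a = (if d \<le> j then j-d else j+L-d)"
    unfolding a_def using mod_lt2[of "j + L - d" L] d j by auto
  have nxj: "nxt L j = (if Suc j = L then 0 else Suc j)" using nxt_eq[OF j] .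
  have nxl: "nxt L j < L" using nxt_lt[OF L0] .
  have al: "a < L" unfolding a_def using L0 by simp
  have pt: "olab (F x) = (u[j := None, nxt L j := Some k]) ! x" if x: "x < L" for x
  proof (cases "x = nxt L j")
    case True
    then show ?thesis unfolding F_def using lu nxl by simp
  next
    case False
    define t where "t = (x + L - Suc a) mod L + 1"
    have texp: "t = (if x \<le> a then x+L-a else x-a)"
      unfolding t_def using mod_lt2[of "x + L - Suc a" L] al x by auto
    have pvx: "prv L x = (if x = 0 then L-1 else x-1)" using prv_eq[OF x] .
    have rhs: "(u[j := None, nxt L j := Some k]) ! x = (if x = j then None else u!x)"
      using False x lu by simp
    have ar: "x \<noteq> (if Suc j = L then 0 else Suc j)" using False nxj by simp
    note A = T2_arith[OF L j x d aexp ar texp]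
    have Fx: "F x = (if t = 1 then Bx ((k + n - 1) mod n) else if 2 \<le> t \<and> t \<le> d then w ! prv L x else w ! x)"
      unfolding F_def t_def using False by (simp add: Let_def)
    show ?thesis
    proof (cases "t = 1")
      case True
      then have "x = j \<or> (x<j \<and> j-x<d) \<or> (j<x \<and> j+L-x<d)" by (rule A(1))
      then have "x = j \<or> u!x = None" by (rule disj_helper[OF _ dn[OF x]])
      then show ?thesis using Fx True rhs by auto
    next
      case t1: False
      show ?thesis
      proof (cases "2 \<le> t \<and> t \<le> d")
        case True
        then have "x = j \<or> (x<j \<and> j-x<d) \<or> (j<x \<and> j+L-x<d)" using A(2) by blast
        then have "x = j \<or> u!x = None" by (rule disj_helper[OF _ dn[OF x]])
        moreover have "u!(prv L x) = None"
        proof -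
          have "(prv L x < j \<and> j - prv L x < d) \<or> (j < prv L x \<and> j + L - prv L x < d)"
            using A(3) True unfolding pvx[symmetric] by blast
          then show ?thesis by (rule dn[OF prv_lt[OF L0]])
        qed
        ultimately show ?thesis using Fx True t1 rhs len u_def prv_lt[OF L0] by auto
      next
        case False
        have "t \<ge> 1" unfolding t_def by simp
        then have "\<not> t \<le> d" using False t1 by linarith
        then have "x \<noteq> j" by (rule A(4))
        then show ?thesis using Fx False t1 rhs len u_def x by auto
      qed
    qed
  qed
  have "map olab (map F [0..<L]) = u[j := None, nxt L j := Some k]"
    by (rule nth_equalityI) (use pt lu in auto)
  moreover have "\<forall>x<L. \<forall>m. map F [0..<L] ! x = Bx m \<longrightarrow> m < n"
  proof (intro allI impI)
    fix x m assume x: "x < L" and b: "map F [0..<L] ! x = Bx m"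
    then have b': "F x = Bx m" by simp
    have "F x = Pt k \<or> F x = Bx ((k + n - 1) mod n) \<or> F x = w ! prv L x \<or> F x = w ! x"
      unfolding F_def by (auto simp: Let_def)
    then show "m < n"
    proof (elim disjE)
      assume "F x = w ! prv L x"
      then have "w ! prv L x = Bx m" using b' by simp
      then show "m < n" using box prv_lt[OF L0] by blast
    next
      assume "F x = w ! x"
      then have "w ! x = Bx m" using b' by simp
      then show "m < n" using box x by blast
    qed (use b' n in auto)
  qed
  ultimately show ?thesis using T u_def by auto
qed





lemma T4_arith:
  fixes L j e x b s :: nat
  assumes "2 \<le> L" "j < L" "x < L" "0 < e" "e \<le> L" "b = (if j+e < L then j+e else j+e-L)"
    "x \<noteq> (if j = 0 then L-1 else j-1)" "s = (if x < b then b - x else b + L - x)"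
  shows "s = 1 \<Longrightarrow> x = j \<or> (j<x \<and> x-j<e) \<or> (x<j \<and> x+L-j<e)"
    and "2 \<le> s \<Longrightarrow> s \<le> e \<Longrightarrow> x = j \<or> (j<x \<and> x-j<e) \<or> (x<j \<and> x+L-j<e)"
    and "2 \<le> s \<Longrightarrow> s \<le> e \<Longrightarrow> (j<(if Suc x = L then 0 else Suc x) \<and> (if Suc x = L then 0 else Suc x)-j<e) \<or> ((if Suc x = L then 0 else Suc x)<j \<and> (if Suc x = L then 0 else Suc x)+L-j<e)"
    and "\<not> s \<le> e \<Longrightarrow> x \<noteq> j"
  using assms by (auto split: if_splits)

lemma next_facts:
  assumes len: "length u = L" and L0: "0 < L" and j: "j < L" and uj: "u!j \<noteq> None"
  shows "0 < next_dist L u j" "next_dist L u j \<le> L"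
    "\<And>y. y < L \<Longrightarrow> (j<y \<and> y-j < next_dist L u j) \<or> (y<j \<and> y+L-j < next_dist L u j) \<Longrightarrow> u!y = None"
proof -
  define P where "P = (\<lambda>d. 0 < d \<and> u ! ((j + d) mod L) \<noteq> None)"
  have PL: "P L" unfolding P_def using L0 j uj by simp
  have pd: "next_dist L u j = (LEAST d. P d)" unfolding next_dist_def P_def by simp
  show "0 < next_dist L u j" using LeastI[of P L, OF PL] pd P_def by simp
  show "next_dist L u j \<le> L" using Least_le[of P L, OF PL] pd by simp
  fix y assume y: "y < L" and c: "(j<y \<and> y-j < next_dist L u j) \<or> (y<j \<and> y+L-j < next_dist L u j)"
  define e where "e = (if j < y then y - j else y + L - j)"
  have e: "0 < e" "e < next_dist L u j" using c y j unfolding e_def by auto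
  have "(j + e) mod L = y"
  proof (cases "j < y")
    case True
    then have "j + e = y" unfolding e_def by simp
    then show ?thesis using y by simp
  next
    case False
    then have "j + e = y + L" unfolding e_def using c y j by auto
    then show ?thesis using y by simp
  qed
  moreover have "\<not> P e" using not_less_Least[of e P] e pd by simp
  ultimately show "u!y = None" using e unfolding P_def by simp
qed

lemma T4_res:
  assumes n: "1 \<le> n" and L: "2 \<le> L" and len: "length w = L" and j: "j < L"
    and wj: "w!j = Pt k" and wp: "w!(prv L j) = Bx k"
    and box: "\<forall>x<L. \<forall>m. w!x = Bx m \<longrightarrow> m < n"
  shows "\<exists>w'. T4 L n q w j = Some (w', q k) \<and> length w' = L
     \<and> map olab w' = (map olab w)[prv L j := Some k, j := None]
     \<and> (\<forall>x<L. \<forall>m. w'!x = Bx m \<longrightarrow> m < n)"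
proof -
  define u where "u = map olab w"
  define e where "e = next_dist L u j"
  define b where "b = (j + e) mod L"
  define F where "F = (\<lambda>x. if x = prv L j then Pt k
                         else let s = (b + L - Suc x) mod L + 1 in
                           if s = 1 then Bx (Suc k mod n)
                           else if 2 \<le> s \<and> s \<le> e then w ! nxt L x
                           else w ! x)"
  have L0: "0 < L" using L by simp
  have lu: "length u = L" using len u_def by simp
  have uj: "u!j = Some k" using wj j len u_def by simp
  have e: "0 < e" "e \<le> L" using next_facts[OF lu L0 j] uj e_def by auto
  have en: "\<And>y. y < L \<Longrightarrow> (j<y \<and> y-j < e) \<or> (y<j \<and> y+L-j < e) \<Longrightarrow> u!y = None"
    using next_facts(3)[OF lu L0 j] uj e_def by auto
  have T: "T4 L n q w j = Some (map F [0..<L], q k)"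
    unfolding T4_def F_def b_def e_def u_def using wj wp by (simp add: Let_def)
  have bexp: "b = (if j+e < L then j+e else j+e-L)"
    unfolding b_def using mod_lt2[of "j + e" L] e j by auto
  have pvj: "prv L j = (if j = 0 then L-1 else j-1)" using prv_eq[OF j] .
  have pvl: "prv L j < L" using prv_lt[OF L0] .
  have bl: "b < L" unfolding b_def using L0 by simp
  have pt: "olab (F x) = (u[prv L j := Some k, j := None]) ! x" if x: "x < L" for x
  proof (cases "x = prv L j")
    case True
    moreover have "prv L j \<noteq> j" using pvj j L by auto
    ultimately show ?thesis unfolding F_def using lu pvl by simp
  next
    case False
    define s where "s = (b + L - Suc x) mod L + 1"
    have sexp: "s = (if x < b then b - x else b + L - x)"
      unfolding s_def using mod_lt2[of "b + L - Suc x" L] bl x by auto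
    have nxx: "nxt L x = (if Suc x = L then 0 else Suc x)" using nxt_eq[OF x] .
    have rhs: "(u[prv L j := Some k, j := None]) ! x = (if x = j then None else u!x)"
      using False x lu by simp
    have ar: "x \<noteq> (if j = 0 then L-1 else j-1)" using False pvj by simp
    note A = T4_arith[OF L j x e bexp ar sexp]
    have Fx: "F x = (if s = 1 then Bx (Suc k mod n) else if 2 \<le> s \<and> s \<le> e then w ! nxt L x else w ! x)"
      unfolding F_def s_def using False by (simp add: Let_def)
    show ?thesis
    proof (cases "s = 1")
      case True
      then have "x = j \<or> (j<x \<and> x-j<e) \<or> (x<j \<and> x+L-j<e)" by (rule A(1))
      then have "x = j \<or> u!x = None" by (rule disj_helper[OF _ en[OF x]])
      then show ?thesis using Fx True rhs by auto
    next
      case s1: False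
      show ?thesis
      proof (cases "2 \<le> s \<and> s \<le> e")
        case True
        then have "x = j \<or> (j<x \<and> x-j<e) \<or> (x<j \<and> x+L-j<e)" using A(2) by blast
        then have "x = j \<or> u!x = None" by (rule disj_helper[OF _ en[OF x]])
        moreover have "u!(nxt L x) = None"
        proof -
          have "(j < nxt L x \<and> nxt L x - j < e) \<or> (nxt L x < j \<and> nxt L x + L - j < e)"
            using A(3) True unfolding nxx[symmetric] by blast
          then show ?thesis by (rule en[OF nxt_lt[OF L0]])
        qed
        ultimately show ?thesis using Fx True s1 rhs len u_def nxt_lt[OF L0] by auto
      next
        case False
        have "s \<ge> 1" unfolding s_def by simp
        then have "\<not> s \<le> e" using False s1 by linarith
        then have "x \<noteq> j" by (rule A(4))
        then show ?thesis using Fx False s1 rhs len u_def x by auto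
      qed
    qed
  qed
  have "map olab (map F [0..<L]) = u[prv L j := Some k, j := None]"
    by (rule nth_equalityI) (use pt lu in auto)
  moreover have "\<forall>x<L. \<forall>m. map F [0..<L] ! x = Bx m \<longrightarrow> m < n"
  proof (intro allI impI)
    fix x m assume x: "x < L" and b: "map F [0..<L] ! x = Bx m"
    then have b': "F x = Bx m" by simp
    have "F x = Pt k \<or> F x = Bx (Suc k mod n) \<or> F x = w ! nxt L x \<or> F x = w ! x"
      unfolding F_def by (auto simp: Let_def)
    then show "m < n"
    proof (elim disjE)
      assume "F x = w ! nxt L x"
      then have "w ! nxt L x = Bx m" using b' by simp
      then show "m < n" using box nxt_lt[OF L0] by blast
    next
      assume "F x = w ! x"
      then have "w ! x = Bx m" using b' by simp
      then show "m < n" using box x by blast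
    qed (use b' n in auto)
  qed
  ultimately show ?thesis using T u_def by auto
qed




fun topl :: "nat option \<Rightarrow> pletter" where
  "topl None = Vac" | "topl (Some k) = PPt k"

lemma proj_topl: "proj_letter x = topl (olab x)" by (cases x) auto
lemma plab_proj: "plab (proj_letter x) = olab x" by (cases x) auto

lemma Proj_olab: "Proj w = map topl (map olab w)"
  unfolding Proj_def by (simp add: proj_topl)

lemma Omega_len: "\<omega> \<in> Omega L n \<Longrightarrow> length \<omega> = L"
  unfolding Omega_def wf_lab_def by simp
lemma Omega_wf: "\<omega> \<in> Omega L n \<Longrightarrow> wf_lab L n (map olab \<omega>)"
  unfolding Omega_def by simp
lemma Omega_box: "\<omega> \<in> Omega L n \<Longrightarrow> \<forall>x<L. \<forall>m. \<omega>!x = Bx m \<longrightarrow> m < n"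
  unfolding Omega_def using Omega_len by (auto simp: wf_lab_def)
lemma Omega_lab: "\<omega> \<in> Omega L n \<Longrightarrow> x < L \<Longrightarrow> \<omega>!x = Pt k \<Longrightarrow> k < n"
  unfolding Omega_def wf_lab_def by force
lemma Omega_I: "wf_lab L n (map olab w) \<Longrightarrow> \<forall>x<L. \<forall>m. w!x = Bx m \<longrightarrow> m < n \<Longrightarrow> w \<in> Omega L n"
proof -
  assume a: "wf_lab L n (map olab w)" and b: "\<forall>x<L. \<forall>m. w!x = Bx m \<longrightarrow> m < n"
  have "length w = L" using a unfolding wf_lab_def by simp
  then show "w \<in> Omega L n" unfolding Omega_def using a b by simp
qed

lemma box_upd:
  assumes "\<forall>x<L. \<forall>m. w!x = Bx m \<longrightarrow> m < n" "\<forall>m. a = Bx m \<longrightarrow> m < n" "\<forall>m. b = Bx m \<longrightarrow> m < n"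
  shows "\<forall>x<L. \<forall>m. w[i := a, j := b]!x = Bx m \<longrightarrow> m < n"
proof (intro allI impI)
  fix x m assume x: "x < L" and e: "w[i := a, j := b]!x = Bx m"
  have v: "xs[y := c]!x = c \<or> xs[y := c]!x = xs!x" for xs :: "oletter list" and y c
  proof (cases "y < length xs")
    case True then show ?thesis by (simp add: nth_list_update)
  next
    case False then have "xs[y := c] = xs" by (simp add: list_update_beyond not_less)
    then show ?thesis by simp
  qed
  have "w[i := a, j := b]!x = b \<or> w[i := a, j := b]!x = w[i := a]!x" by (rule v)
  moreover have "w[i := a]!x = a \<or> w[i := a]!x = w!x" by (rule v)
  ultimately have "Bx m = a \<or> Bx m = b \<or> Bx m = w!x" using e by auto
  then show "m < n" using assms x by auto
qed

lemma Proj_Psi: "\<omega> \<in> Omega L n \<Longrightarrow> Proj \<omega> \<in> Psi L n"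
  unfolding Psi_def Proj_def using Omega_wf by (simp add: plab_proj comp_def)

lemma omove_dec:
  assumes "pos < L"
  shows "omove L n p q w pos = T1 L p w pos" "omove L n p q w (L + pos) = T2 L n p w pos"
    "omove L n p q w (2 * L + pos) = T3 L q w pos" "omove L n p q w (3 * L + pos) = T4 L n q w pos"
proof -
  have L0: "L \<noteq> 0" using assms by simp
  have "\<And>c. (c * L + pos) div L = c" "\<And>c. (c * L + pos) mod L = pos" using assms L0 by auto
  then have d: "(L + pos) div L = 1" "(L + pos) mod L = pos" "(2 * L + pos) div L = 2" "(2 * L + pos) mod L = pos"
    "(3 * L + pos) div L = 3" "(3 * L + pos) mod L = pos"
    by (metis mult_1)+
  show "omove L n p q w pos = T1 L p w pos" unfolding omove_def using assms by simp
  show "omove L n p q w (L + pos) = T2 L n p w pos" unfolding omove_def using d by simp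
  show "omove L n p q w (2 * L + pos) = T3 L q w pos" unfolding omove_def using d by simp
  show "omove L n p q w (3 * L + pos) = T4 L n q w pos" unfolding omove_def using d by simp
qed

lemma R_cases:
  assumes n: "1 \<le> n" and L: "2 \<le> L" and om: "\<omega> \<in> Omega L n" and pos: "pos < L"
  shows "(\<exists>k. k < n \<and> pmove L p q (Proj \<omega>) pos = Some ((Proj \<omega>)[pos := Vac, nxt L pos := PPt k], p k)
          \<and> ((\<exists>t. T1 L p \<omega> pos = Some (t, p k) \<and> T2 L n p \<omega> pos = None \<and> t \<in> Omega L n
                 \<and> Proj t = (Proj \<omega>)[pos := Vac, nxt L pos := PPt k])
           \<or> (\<exists>t. T1 L p \<omega> pos = None \<and> T2 L n p \<omega> pos = Some (t, p k) \<and> t \<in> Omega L n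
                 \<and> Proj t = (Proj \<omega>)[pos := Vac, nxt L pos := PPt k])))
      \<or> (T1 L p \<omega> pos = None \<and> T2 L n p \<omega> pos = None \<and> pmove L p q (Proj \<omega>) pos = None)"
proof -
  have L0: "0 < L" using L by simp
  have len: "length \<omega> = L" using Omega_len om by simp
  have nl: "nxt L pos < L" using nxt_lt[OF L0] .
  have w: "wf_lab L n (map olab \<omega>)" using Omega_wf om by simp
  have box: "\<forall>x<L. \<forall>m. \<omega>!x = Bx m \<longrightarrow> m < n" using Omega_box om by simp
  have pj: "\<And>x. x < L \<Longrightarrow> Proj \<omega> ! x = proj_letter (\<omega> ! x)" unfolding Proj_def using len by simp
  show ?thesis
  proof (cases "\<omega> ! pos")
    case (Pt k)
    note wk = Pt
    have kn: "k < n" using Omega_lab[OF om pos wk] .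
    show ?thesis
    proof (cases "\<omega> ! nxt L pos")
      case (Bx m)
      note wm = Bx
      have pm: "pmove L p q (Proj \<omega>) pos = Some ((Proj \<omega>)[pos := Vac, nxt L pos := PPt k], p k)"
        by (rule pmove_right[OF pos]) (use pj pos nl wk wm in auto)
      have ne: "nxt L pos \<noteq> pos" using wk wm by auto
      have hop: "wf_lab L n ((map olab \<omega>)[pos := None, nxt L pos := Some k])"
        by (rule HR[OF n L _ w pos]) (use len wk wm nl pos in auto)
      show ?thesis
      proof (cases "m = k")
        case False
        define t where "t = \<omega>[pos := Bx m, nxt L pos := Pt k]"
        have T1: "T1 L p \<omega> pos = Some (t, p k)" unfolding T1_def t_def using wk wm False by simp
        have T2: "T2 L n p \<omega> pos = None" unfolding T2_def using wk wm False by simp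
        have "map olab t = (map olab \<omega>)[pos := None, nxt L pos := Some k]" unfolding t_def by (simp add: map_update)
        moreover have "\<forall>x<L. \<forall>m'. t!x = Bx m' \<longrightarrow> m' < n"
          unfolding t_def by (rule box_upd[OF box]) (use box wm nl in auto)
        ultimately have tO: "t \<in> Omega L n" using hop Omega_I by metis
        have "Proj t = (Proj \<omega>)[pos := Vac, nxt L pos := PPt k]" unfolding t_def Proj_def by (simp add: map_update)
        then show ?thesis using pm T1 T2 tO kn by blast
      next
        case True
        obtain t where t: "T2 L n p \<omega> pos = Some (t, p k)" "length t = L"
          "map olab t = (map olab \<omega>)[pos := None, nxt L pos := Some k]" "\<forall>x<L. \<forall>m. t!x = Bx m \<longrightarrow> m < n"
          using T2_res[OF n L len pos wk] wm True box by blast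
        have T1: "T1 L p \<omega> pos = None" unfolding T1_def using wk wm True by simp
        have tO: "t \<in> Omega L n" using hop t Omega_I by metis
        have "Proj t = map topl (map olab t)" by (rule Proj_olab)
        also have "\<dots> = map topl ((map olab \<omega>)[pos := None, nxt L pos := Some k])" by (simp only: t(3))
        also have "\<dots> = (Proj \<omega>)[pos := Vac, nxt L pos := PPt k]" by (simp add: Proj_olab map_update)
        finally show ?thesis using pm T1 t(1) tO kn by blast
      qed
    next
      case (Pt k')
      have "T1 L p \<omega> pos = None" unfolding T1_def using wk Pt by simp
      moreover have "T2 L n p \<omega> pos = None" unfolding T2_def using wk Pt by simp
      moreover have "pmove L p q (Proj \<omega>) pos = None" unfolding pmove_def using wk Pt pj pos nl by simp
      ultimately show ?thesis by blast
    qed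
  next
    case (Bx m)
    have "T1 L p \<omega> pos = None" unfolding T1_def using Bx by simp
    moreover have "T2 L n p \<omega> pos = None" unfolding T2_def using Bx by simp
    moreover have "pmove L p q (Proj \<omega>) pos = None" unfolding pmove_def using Bx pj pos nl by simp
    ultimately show ?thesis by blast
  qed
qed

lemma L_cases:
  assumes n: "1 \<le> n" and L: "2 \<le> L" and om: "\<omega> \<in> Omega L n" and pos: "pos < L"
  shows "(\<exists>k. k < n \<and> pmove L p q (Proj \<omega>) (L + pos) = Some ((Proj \<omega>)[prv L pos := PPt k, pos := Vac], q k)
          \<and> ((\<exists>t. T3 L q \<omega> pos = Some (t, q k) \<and> T4 L n q \<omega> pos = None \<and> t \<in> Omega L n
                 \<and> Proj t = (Proj \<omega>)[prv L pos := PPt k, pos := Vac])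
           \<or> (\<exists>t. T3 L q \<omega> pos = None \<and> T4 L n q \<omega> pos = Some (t, q k) \<and> t \<in> Omega L n
                 \<and> Proj t = (Proj \<omega>)[prv L pos := PPt k, pos := Vac])))
      \<or> (T3 L q \<omega> pos = None \<and> T4 L n q \<omega> pos = None \<and> pmove L p q (Proj \<omega>) (L + pos) = None)"
proof -
  have L0: "0 < L" using L by simp
  have len: "length \<omega> = L" using Omega_len om by simp
  have pl: "prv L pos < L" using prv_lt[OF L0] .
  have w: "wf_lab L n (map olab \<omega>)" using Omega_wf om by simp
  have box: "\<forall>x<L. \<forall>m. \<omega>!x = Bx m \<longrightarrow> m < n" using Omega_box om by simp
  have pj: "\<And>x. x < L \<Longrightarrow> Proj \<omega> ! x = proj_letter (\<omega> ! x)" unfolding Proj_def using len by simp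
  have dv: "(L + pos) div L = 1" "(L + pos) mod L = pos" using pos by auto
  show ?thesis
  proof (cases "\<omega> ! pos")
    case (Pt k)
    note wk = Pt
    have kn: "k < n" using Omega_lab[OF om pos wk] .
    show ?thesis
    proof (cases "\<omega> ! prv L pos")
      case (Bx m)
      note wm = Bx
      have pm: "pmove L p q (Proj \<omega>) (L + pos) = Some ((Proj \<omega>)[prv L pos := PPt k, pos := Vac], q k)"
        by (rule pmove_left[OF pos]) (use pj pos pl wk wm in auto)
      have ne: "prv L pos \<noteq> pos" using wk wm by auto
      have hop: "wf_lab L n ((map olab \<omega>)[prv L pos := Some k, pos := None])"
        by (rule HL[OF n L _ w pos]) (use len wk wm pl pos in auto)
      show ?thesis
      proof (cases "m = k")
        case False
        define t where "t = \<omega>[prv L pos := Pt k, pos := Bx m]"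
        have T3: "T3 L q \<omega> pos = Some (t, q k)" unfolding T3_def t_def using wk wm False by simp
        have T4: "T4 L n q \<omega> pos = None" unfolding T4_def using wk wm False by simp
        have "map olab t = (map olab \<omega>)[prv L pos := Some k, pos := None]" unfolding t_def by (simp add: map_update)
        moreover have "\<forall>x<L. \<forall>m'. t!x = Bx m' \<longrightarrow> m' < n"
          unfolding t_def by (rule box_upd[OF box]) (use box wm pl in auto)
        ultimately have tO: "t \<in> Omega L n" using hop Omega_I by metis
        have "Proj t = (Proj \<omega>)[prv L pos := PPt k, pos := Vac]" unfolding t_def Proj_def by (simp add: map_update)
        then show ?thesis using pm T3 T4 tO kn by blast
      next
        case True
        obtain t where t: "T4 L n q \<omega> pos = Some (t, q k)" "length t = L"
          "map olab t = (map olab \<omega>)[prv L pos := Some k, pos := None]" "\<forall>x<L. \<forall>m. t!x = Bx m \<longrightarrow> m < n"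
          using T4_res[OF n L len pos wk] wm True box by blast
        have T3: "T3 L q \<omega> pos = None" unfolding T3_def using wk wm True by simp
        have tO: "t \<in> Omega L n" using hop t Omega_I by metis
        have "Proj t = map topl (map olab t)" by (rule Proj_olab)
        also have "\<dots> = map topl ((map olab \<omega>)[prv L pos := Some k, pos := None])" by (simp only: t(3))
        also have "\<dots> = (Proj \<omega>)[prv L pos := PPt k, pos := Vac]" by (simp add: Proj_olab map_update)
        finally show ?thesis using pm T3 t(1) tO kn by blast
      qed
    next
      case (Pt k')
      have "T3 L q \<omega> pos = None" unfolding T3_def using wk Pt by simp
      moreover have "T4 L n q \<omega> pos = None" unfolding T4_def using wk Pt by simp
      moreover have "pmove L p q (Proj \<omega>) (L + pos) = None" unfolding pmove_def using wk Pt pj pos pl dv by simp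
      ultimately show ?thesis by blast
    qed
  next
    case (Bx m)
    have "T3 L q \<omega> pos = None" unfolding T3_def using Bx by (simp split: oletter.splits)
    moreover have "T4 L n q \<omega> pos = None" unfolding T4_def using Bx by (simp split: oletter.splits)
    moreover have "pmove L p q (Proj \<omega>) (L + pos) = None" unfolding pmove_def using Bx pj pos pl dv
      by (simp split: pletter.splits)
    ultimately show ?thesis by blast
  qed
qed




lemma sum_split: "(\<Sum>i<(a::nat)+b. g i) = (\<Sum>i<a. g i) + (\<Sum>i<b. g (a+i))"
  by (induct b) (simp_all add: add.assoc)

lemma sum4: "(\<Sum>i<4*(L::nat). g i) = (\<Sum>pos<L. g pos + g (L+pos) + g (2*L+pos) + g (3*L+pos))"
proof -
  have e: "4 * L = L + L + L + L" by simp
  have e2: "2*L = L+L" "3*L = L+L+L" by simp_all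
  have "(\<Sum>i<4*L. g i) = (\<Sum>i<L. g i) + (\<Sum>i<L. g (L+i)) + (\<Sum>i<L. g (L+L+i)) + (\<Sum>i<L. g (L+L+L+i))"
    unfolding e sum_split by (simp add: add.assoc)
  also have "\<dots> = (\<Sum>pos<L. g pos + g (L+pos) + g (L+L+pos) + g (L+L+L+pos))"
    by (simp add: sum.distrib)
  also have "\<dots> = (\<Sum>pos<L. g pos + g (L+pos) + g (2*L+pos) + g (3*L+pos))"
    unfolding e2 ..
  finally show ?thesis .
qed

lemma sum2: "(\<Sum>i<2*(L::nat). g i) = (\<Sum>pos<L. g pos + g (L+pos))"
proof -
  have e: "2 * L = L + L" by simp
  show ?thesis unfolding e sum_split by (simp add: sum.distrib)
qed

lemma omove_res:
  assumes n: "1 \<le> n" and L: "2 \<le> L" and om: "\<omega> \<in> Omega L n"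
    and pos: "\<forall>k<n. 0 < p k \<and> 0 < q k"
    and i: "i < 4 * L" and m: "omove L n p q \<omega> i = Some (t, r)"
  shows "t \<in> Omega L n \<and> 0 < r"
proof -
  have L0: "0 < L" using L by simp
  define ps where "ps = i mod L"
  have psl: "ps < L" using L0 ps_def by simp
  have idiv: "i div L < 4" using i L0 by (simp add: div_less_iff_less_mult)
  note R = R_cases[OF n L om psl, of p q]
  note LL = L_cases[OF n L om psl, of p q]
  consider "i div L = 0" | "i div L = 1" | "i div L = 2" | "i div L = 3" using idiv by linarith
  then show ?thesis
  proof cases
    case 1
    then have "T1 L p \<omega> ps = Some (t, r)" using m unfolding omove_def ps_def by (simp add: Let_def)
    then show ?thesis using R pos by auto
  next
    case 2
    then have "T2 L n p \<omega> ps = Some (t, r)" using m unfolding omove_def ps_def by (simp add: Let_def)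
    then show ?thesis using R pos by auto
  next
    case 3
    then have "T3 L q \<omega> ps = Some (t, r)" using m unfolding omove_def ps_def by (simp add: Let_def)
    then show ?thesis using LL pos by auto
  next
    case 4
    then have "T4 L n q \<omega> ps = Some (t, r)" using m unfolding omove_def ps_def by (simp add: Let_def)
    then show ?thesis using LL pos by auto
  qed
qed

lemma QOmega_nn:
  assumes n: "1 \<le> n" and L: "2 \<le> L" and om: "\<omega> \<in> Omega L n"
    and pos: "\<forall>k<n. 0 < p k \<and> 0 < q k"
  shows "0 \<le> QOmega L n p q \<omega> \<omega>'"
  unfolding QOmega_def trate_def
proof (rule sum_nonneg)
  fix i assume "i \<in> {..<4 * L}"
  then show "0 \<le> (case omove L n p q \<omega> i of None \<Rightarrow> 0 | Some (t, r) \<Rightarrow> if t = \<omega>' then r else 0)"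
    using omove_res[OF n L om pos, of i] by (auto split: option.splits intro: less_imp_le)
qed

lemma Omega_fin: "finite (Omega L n)"
proof -
  have "Omega L n \<subseteq> {xs. set xs \<subseteq> (Pt ` {..<n} \<union> Bx ` {..<n}) \<and> length xs = L}"
  proof
    fix w assume w: "w \<in> Omega L n"
    have len: "length w = L" using Omega_len w by simp
    have "set w \<subseteq> Pt ` {..<n} \<union> Bx ` {..<n}"
    proof
      fix a assume "a \<in> set w"
      then obtain x where x: "x < L" "w ! x = a" using len by (metis in_set_conv_nth)
      show "a \<in> Pt ` {..<n} \<union> Bx ` {..<n}"
      proof (cases a)
        case (Pt k) then show ?thesis using Omega_lab[OF w x(1)] x by auto
      next
        case (Bx m) then show ?thesis using Omega_box[OF w] x by auto
      qed
    qed
    then show "w \<in> {xs. set xs \<subseteq> (Pt ` {..<n} \<union> Bx ` {..<n}) \<and> length xs = L}" using len by simp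
  qed
  moreover have "finite {xs. set xs \<subseteq> (Pt ` {..<n} \<union> Bx ` {..<n}) \<and> length xs = L}"
    by (rule finite_lists_length_eq) simp
  ultimately show ?thesis by (rule finite_subset)
qed

lemma Psi_fin: "finite (Psi L n)"
proof -
  have "Psi L n \<subseteq> {xs. set xs \<subseteq> (insert Vac (PPt ` {..<n})) \<and> length xs = L}"
  proof
    fix w assume w: "w \<in> Psi L n"
    have len: "length w = L" using Psi_len w by simp
    have "set w \<subseteq> insert Vac (PPt ` {..<n})"
    proof
      fix a assume "a \<in> set w"
      then obtain x where x: "x < L" "w ! x = a" using len by (metis in_set_conv_nth)
      show "a \<in> insert Vac (PPt ` {..<n})"
      proof (cases a)
        case (PPt k) then show ?thesis using Psi_lab[OF w x(1)] x by auto
      next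
        case Vac then show ?thesis by simp
      qed
    qed
    then show "w \<in> {xs. set xs \<subseteq> (insert Vac (PPt ` {..<n})) \<and> length xs = L}" using len by simp
  qed
  moreover have "finite {xs. set xs \<subseteq> (insert Vac (PPt ` {..<n})) \<and> length xs = L}"
    by (rule finite_lists_length_eq) simp
  ultimately show ?thesis by (rule finite_subset)
qed

lemma lump:
  assumes n: "1 \<le> n" and L: "2 \<le> L" and om: "\<omega> \<in> Omega L n"
    and pos: "\<forall>k<n. 0 < p k \<and> 0 < q k"
  shows "(\<Sum>\<omega>'\<in>{\<omega>'\<in>Omega L n. Proj \<omega>' = \<psi>'}. QOmega L n p q \<omega> \<omega>') = QPsi L p q (Proj \<omega>) \<psi>'"
proof -
  define F where "F = {\<omega>'\<in>Omega L n. Proj \<omega>' = \<psi>'}"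
  have fF: "finite F" unfolding F_def using Omega_fin by simp
  define f where "f = (\<lambda>i \<omega>'. case omove L n p q \<omega> i of None \<Rightarrow> 0 | Some (t, r) \<Rightarrow> if t = \<omega>' then r else (0::real))"
  define g where "g = (\<lambda>i. case omove L n p q \<omega> i of None \<Rightarrow> 0 | Some (t, r) \<Rightarrow> if Proj t = \<psi>' then r else (0::real))"
  define h where "h = (\<lambda>i. case pmove L p q (Proj \<omega>) i of None \<Rightarrow> 0 | Some (t, r) \<Rightarrow> if t = \<psi>' then r else (0::real))"
  have "(\<Sum>\<omega>'\<in>F. QOmega L n p q \<omega> \<omega>') = (\<Sum>\<omega>'\<in>F. \<Sum>i<4*L. f i \<omega>')"
    unfolding QOmega_def trate_def f_def by simp
  also have "\<dots> = (\<Sum>i<4*L. \<Sum>\<omega>'\<in>F. f i \<omega>')" by (rule sum.swap)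
  also have "\<dots> = (\<Sum>i<4*L. g i)"
  proof (rule sum.cong)
    fix i assume i: "i \<in> {..<4*L}"
    show "(\<Sum>\<omega>'\<in>F. f i \<omega>') = g i"
    proof (cases "omove L n p q \<omega> i")
      case None then show ?thesis unfolding f_def g_def by simp
    next
      case (Some a)
      then obtain t r where a: "omove L n p q \<omega> i = Some (t, r)" by (cases a) auto
      have tO: "t \<in> Omega L n" using omove_res[OF n L om pos _ a] i by simp
      have "(\<Sum>\<omega>'\<in>F. f i \<omega>') = (\<Sum>\<omega>'\<in>F. if t = \<omega>' then r else 0)" unfolding f_def a by simp
      also have "\<dots> = (if t \<in> F then r else 0)" using sum.delta'[OF fF, of t "\<lambda>_. r"] by simp
      also have "\<dots> = g i" unfolding g_def a F_def using tO by simp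
      finally show ?thesis .
    qed
  qed simp
  also have "\<dots> = (\<Sum>ps<L. g ps + g (L+ps) + g (2*L+ps) + g (3*L+ps))" by (rule sum4)
  also have "\<dots> = (\<Sum>ps<L. h ps + h (L+ps))"
  proof (rule sum.cong)
    fix ps assume psl: "ps \<in> {..<L}"
    then have psl: "ps < L" by simp
    note od = omove_dec[OF psl, of n p q \<omega>]
    have A: "g ps + g (L+ps) = h ps"
      using R_cases[OF n L om psl, of p q] unfolding g_def h_def od by auto
    have B: "g (2*L+ps) + g (3*L+ps) = h (L+ps)"
      using L_cases[OF n L om psl, of p q] unfolding g_def h_def od by auto
    show "g ps + g (L+ps) + g (2*L+ps) + g (3*L+ps) = h ps + h (L+ps)" using A B by simp
  qed simp
  also have "\<dots> = (\<Sum>i<2*L. h i)" by (rule sum2[symmetric])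
  also have "\<dots> = QPsi L p q (Proj \<omega>) \<psi>'" unfolding QPsi_def trate_def h_def ..
  finally show ?thesis unfolding F_def .
qed




lemma QPsi_self:
  assumes n: "1 \<le> n" and L: "2 \<le> L" and ps: "\<psi> \<in> Psi L n"
    and pos: "\<forall>k<n. 0 < p k \<and> 0 < q k"
  shows "QPsi L p q \<psi> \<psi> = 0"
  unfolding QPsi_def trate_def
proof (rule sum.neutral, rule ballI)
  fix i assume i: "i \<in> {..<2 * L}"
  show "(case pmove L p q \<psi> i of None \<Rightarrow> 0 | Some (t, r) \<Rightarrow> if t = \<psi> then r else 0) = 0"
  proof (cases "pmove L p q \<psi> i")
    case None then show ?thesis by simp
  next
    case (Some a)
    then obtain t r where a: "pmove L p q \<psi> i = Some (t, r)" by (cases a) auto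
    have "t \<noteq> \<psi>" using pmove_Psi(2)[OF n L ps _ a pos] i by simp
    then show ?thesis using a by simp
  qed
qed

lemma Zero:
  assumes n: "1 \<le> n" and L: "2 \<le> L" and om: "\<omega> \<in> Omega L n" and om': "\<omega>' \<in> Omega L n"
    and pr: "Proj \<omega>' = Proj \<omega>"
    and pos: "\<forall>k<n. 0 < p k \<and> 0 < q k"
  shows "QOmega L n p q \<omega> \<omega>' = 0"
proof -
  define F where "F = {\<omega>'\<in>Omega L n. Proj \<omega>' = Proj \<omega>}"
  have fF: "finite F" unfolding F_def using Omega_fin by simp
  have "(\<Sum>x\<in>F. QOmega L n p q \<omega> x) = QPsi L p q (Proj \<omega>) (Proj \<omega>)"
    unfolding F_def by (rule lump[OF n L om pos])
  also have "\<dots> = 0" by (rule QPsi_self[OF n L Proj_Psi[OF om] pos])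
  finally have s0: "(\<Sum>x\<in>F. QOmega L n p q \<omega> x) = 0" .
  have "\<forall>x\<in>F. QOmega L n p q \<omega> x = 0"
    using sum_nonneg_eq_0_iff[OF fF, of "QOmega L n p q \<omega>"] s0 QOmega_nn[OF n L om pos] by simp
  moreover have "\<omega>' \<in> F" unfolding F_def using om' pr by simp
  ultimately show ?thesis by simp
qed

theorem corollary3p3:
  fixes L n :: nat and p q :: "nat \<Rightarrow> real"
    and \<pi> :: "pletter list \<Rightarrow> real" and \<pi>h :: "oletter list \<Rightarrow> real"
  assumes "1 \<le> n" and "n < L"
    and "\<forall>k<n. 0 < p k \<and> 0 < q k"
    and "stationary (Psi L n) (QPsi L p q) \<pi>"
    and "stationary (Omega L n) (QOmega L n p q) \<pi>h"
  shows "\<forall>\<psi>\<in>Psi L n. \<pi> \<psi> = (\<Sum>\<omega>\<in>{\<omega>\<in>Omega L n. Proj \<omega> = \<psi>}. \<pi>h \<omega>)"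
proof -
  note n = assms(1) and nL = assms(2) and pos = assms(3) and stP = assms(4) and stO = assms(5)
  have L: "2 \<le> L" using n nL by simp
  define Om where "Om = Omega L n"
  define Ps where "Ps = Psi L n"
  define Q where "Q = QOmega L n p q"
  define QP where "QP = QPsi L p q"
  define F where "F = (\<lambda>\<psi>. {\<omega>\<in>Om. Proj \<omega> = \<psi>})"
  define \<mu> where "\<mu> = (\<lambda>\<psi>. \<Sum>\<omega>\<in>F \<psi>. \<pi>h \<omega>)"
  have fO: "finite Om" unfolding Om_def by (rule Omega_fin)
  have fP: "finite Ps" unfolding Ps_def by (rule Psi_fin)
  have fF: "\<And>\<psi>. finite (F \<psi>)" unfolding F_def using fO by simp
  have img: "Proj ` Om \<subseteq> Ps" unfolding Om_def Ps_def using Proj_Psi by blast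
  have pinn: "\<forall>\<omega>\<in>Om. 0 \<le> \<pi>h \<omega>" using stO unfolding stationary_def Om_def by simp
  have sum1: "(\<Sum>\<omega>\<in>Om. \<pi>h \<omega>) = 1" using stO unfolding stationary_def Om_def by simp
  have balO: "\<And>\<omega>. \<omega> \<in> Om \<Longrightarrow> (\<Sum>\<omega>'\<in>Om - {\<omega>}. \<pi>h \<omega> * Q \<omega> \<omega>') = (\<Sum>\<omega>'\<in>Om - {\<omega>}. \<pi>h \<omega>' * Q \<omega>' \<omega>)"
    using stO unfolding stationary_def Om_def Q_def by blast
  have K: "\<And>\<omega> \<psi>'. \<omega> \<in> Om \<Longrightarrow> (\<Sum>\<omega>'\<in>F \<psi>'. Q \<omega> \<omega>') = QP (Proj \<omega>) \<psi>'"
    unfolding F_def Om_def Q_def QP_def using lump[OF n L _ pos] by blast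
  have Z: "\<And>\<omega> \<omega>'. \<omega> \<in> Om \<Longrightarrow> \<omega>' \<in> Om \<Longrightarrow> Proj \<omega>' = Proj \<omega> \<Longrightarrow> Q \<omega> \<omega>' = 0"
    unfolding Om_def Q_def using Zero[OF n L _ _ _ pos] by blast
  have grp: "\<And>h. (\<Sum>\<psi>\<in>Ps. \<Sum>\<omega>\<in>F \<psi>. h \<omega>) = (\<Sum>\<omega>\<in>Om. h \<omega>)"
    unfolding F_def by (rule sum.group[OF fO fP img])
  have O: "(\<Sum>\<omega>'\<in>Om - {\<omega>}. Q \<omega> \<omega>') = (\<Sum>\<psi>'\<in>Ps - {Proj \<omega>}. QP (Proj \<omega>) \<psi>')" if om: "\<omega> \<in> Om" for \<omega>
  proof -
    have PO: "Proj \<omega> \<in> Ps" using img om by blast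
    have "(\<Sum>\<omega>'\<in>Om. Q \<omega> \<omega>') = Q \<omega> \<omega> + (\<Sum>\<omega>'\<in>Om - {\<omega>}. Q \<omega> \<omega>')"
      using om fO by (simp add: sum.remove)
    moreover have "Q \<omega> \<omega> = 0" using Z om by simp
    ultimately have "(\<Sum>\<omega>'\<in>Om - {\<omega>}. Q \<omega> \<omega>') = (\<Sum>\<omega>'\<in>Om. Q \<omega> \<omega>')" by simp
    also have "\<dots> = (\<Sum>\<psi>'\<in>Ps. \<Sum>\<omega>'\<in>F \<psi>'. Q \<omega> \<omega>')" using grp[of "Q \<omega>"] by simp
    also have "\<dots> = (\<Sum>\<psi>'\<in>Ps. QP (Proj \<omega>) \<psi>')" using K om by simp
    also have "\<dots> = QP (Proj \<omega>) (Proj \<omega>) + (\<Sum>\<psi>'\<in>Ps - {Proj \<omega>}. QP (Proj \<omega>) \<psi>')"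
      using PO fP by (simp add: sum.remove)
    also have "QP (Proj \<omega>) (Proj \<omega>) = 0" unfolding QP_def
      using QPsi_self[OF n L _ pos] PO Ps_def by simp
    finally show ?thesis by simp
  qed
  have stM: "stationary Ps QP \<mu>"
    unfolding stationary_def
  proof (intro conjI ballI)
    fix \<psi> assume "\<psi> \<in> Ps"
    show "0 \<le> \<mu> \<psi>" unfolding \<mu>_def F_def using pinn by (auto intro: sum_nonneg)
  next
    show "(\<Sum>\<psi>\<in>Ps. \<mu> \<psi>) = 1" unfolding \<mu>_def using grp[of \<pi>h] sum1 by simp
  next
    fix \<psi> assume psi: "\<psi> \<in> Ps"
    define G where "G = {\<omega>'\<in>Om. Proj \<omega>' \<noteq> \<psi>}"
    have fG: "finite G" unfolding G_def using fO by simp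
    have "(\<Sum>\<psi>'\<in>Ps - {\<psi>}. \<mu> \<psi> * QP \<psi> \<psi>') = \<mu> \<psi> * (\<Sum>\<psi>'\<in>Ps - {\<psi>}. QP \<psi> \<psi>')"
      by (simp add: sum_distrib_left)
    also have "\<dots> = (\<Sum>\<omega>\<in>F \<psi>. \<pi>h \<omega> * (\<Sum>\<psi>'\<in>Ps - {\<psi>}. QP \<psi> \<psi>'))"
      unfolding \<mu>_def by (simp add: sum_distrib_right)
    also have "\<dots> = (\<Sum>\<omega>\<in>F \<psi>. \<pi>h \<omega> * (\<Sum>\<omega>'\<in>Om - {\<omega>}. Q \<omega> \<omega>'))"
    proof (rule sum.cong)
      fix \<omega> assume "\<omega> \<in> F \<psi>"
      then have "\<omega> \<in> Om" "Proj \<omega> = \<psi>" unfolding F_def by auto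
      then show "\<pi>h \<omega> * (\<Sum>\<psi>'\<in>Ps - {\<psi>}. QP \<psi> \<psi>') = \<pi>h \<omega> * (\<Sum>\<omega>'\<in>Om - {\<omega>}. Q \<omega> \<omega>')"
        using O by simp
    qed simp
    also have "\<dots> = (\<Sum>\<omega>\<in>F \<psi>. \<Sum>\<omega>'\<in>Om - {\<omega>}. \<pi>h \<omega>' * Q \<omega>' \<omega>)"
    proof (rule sum.cong)
      fix \<omega> assume "\<omega> \<in> F \<psi>"
      then have "\<omega> \<in> Om" unfolding F_def by auto
      then show "\<pi>h \<omega> * (\<Sum>\<omega>'\<in>Om - {\<omega>}. Q \<omega> \<omega>') = (\<Sum>\<omega>'\<in>Om - {\<omega>}. \<pi>h \<omega>' * Q \<omega>' \<omega>)"
        using balO by (simp add: sum_distrib_left)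
    qed simp
    also have "\<dots> = (\<Sum>\<omega>\<in>F \<psi>. \<Sum>\<omega>'\<in>G. \<pi>h \<omega>' * Q \<omega>' \<omega>)"
    proof (rule sum.cong)
      fix \<omega> assume "\<omega> \<in> F \<psi>"
      then have om: "\<omega> \<in> Om" "Proj \<omega> = \<psi>" unfolding F_def by auto
      show "(\<Sum>\<omega>'\<in>Om - {\<omega>}. \<pi>h \<omega>' * Q \<omega>' \<omega>) = (\<Sum>\<omega>'\<in>G. \<pi>h \<omega>' * Q \<omega>' \<omega>)"
      proof (rule sum.mono_neutral_right)
        show "finite (Om - {\<omega>})" using fO by simp
        show "G \<subseteq> Om - {\<omega>}" unfolding G_def using om by auto
        show "\<forall>i\<in>Om - {\<omega>} - G. \<pi>h i * Q i \<omega> = 0"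
        proof
          fix i assume "i \<in> Om - {\<omega>} - G"
          then have "i \<in> Om" "Proj i = \<psi>" unfolding G_def by auto
          then have "Q i \<omega> = 0" using Z om by simp
          then show "\<pi>h i * Q i \<omega> = 0" by simp
        qed
      qed
    qed simp
    also have "\<dots> = (\<Sum>\<omega>'\<in>G. \<Sum>\<omega>\<in>F \<psi>. \<pi>h \<omega>' * Q \<omega>' \<omega>)" by (rule sum.swap)
    also have "\<dots> = (\<Sum>\<omega>'\<in>G. \<pi>h \<omega>' * QP (Proj \<omega>') \<psi>)"
    proof (rule sum.cong)
      fix \<omega>' assume "\<omega>' \<in> G"
      then have "\<omega>' \<in> Om" unfolding G_def by auto
      then show "(\<Sum>\<omega>\<in>F \<psi>. \<pi>h \<omega>' * Q \<omega>' \<omega>) = \<pi>h \<omega>' * QP (Proj \<omega>') \<psi>"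
        using K by (simp add: sum_distrib_left[symmetric])
    qed simp
    also have "\<dots> = (\<Sum>\<psi>'\<in>Ps - {\<psi>}. \<Sum>\<omega>'\<in>{x. x \<in> G \<and> Proj x = \<psi>'}. \<pi>h \<omega>' * QP (Proj \<omega>') \<psi>)"
    proof (rule sum.group[symmetric, OF fG])
      show "finite (Ps - {\<psi>})" using fP by simp
      show "Proj ` G \<subseteq> Ps - {\<psi>}" unfolding G_def using img by auto
    qed
    also have "\<dots> = (\<Sum>\<psi>'\<in>Ps - {\<psi>}. \<mu> \<psi>' * QP \<psi>' \<psi>)"
    proof (rule sum.cong)
      fix \<psi>' assume "\<psi>' \<in> Ps - {\<psi>}"
      then have "{x. x \<in> G \<and> Proj x = \<psi>'} = F \<psi>'" unfolding G_def F_def by auto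
      then show "(\<Sum>\<omega>'\<in>{x. x \<in> G \<and> Proj x = \<psi>'}. \<pi>h \<omega>' * QP (Proj \<omega>') \<psi>) = \<mu> \<psi>' * QP \<psi>' \<psi>"
        unfolding \<mu>_def by (simp add: sum_distrib_right F_def)
    qed simp
    finally show "(\<Sum>\<psi>'\<in>Ps - {\<psi>}. \<mu> \<psi> * QP \<psi> \<psi>') = (\<Sum>\<psi>'\<in>Ps - {\<psi>}. \<mu> \<psi>' * QP \<psi>' \<psi>)" .
  qed
  have Qnn: "\<forall>s\<in>Ps. \<forall>s'\<in>Ps. 0 \<le> QP s s'"
    unfolding Ps_def QP_def using QPsi_nonneg[OF n L _ pos] by blast
  have stPi: "stationary Ps QP \<pi>" using stP unfolding Ps_def QP_def .
  have reachP: "\<forall>s\<in>Ps. (\<lambda>a b. b \<in> Ps \<and> b \<noteq> a \<and> 0 < QP a b)\<^sup>*\<^sup>* s (canon L n)"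
    unfolding Ps_def QP_def using reach[OF n nL pos] by blast
  have "\<forall>s\<in>Ps. \<pi> s = \<mu> s" by (rule uniq[OF fP Qnn stPi stM reachP])
  then show ?thesis unfolding Ps_def \<mu>_def F_def Om_def by simp
qed


end
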